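(* Let $\wp(z;\tau)$ be the Weierstrass $\wp$-function of the lattice $\Lambda(1,\tau)=\{m+n\tau:m,n\in\mathbb{Z}\}$ ($\mathrm{Im}\,\tau>0$), satisfying $(\wp')^2=4\wp^3-g_2\wp-g_3=4(\wp-e_1)(\wp-e_2)(\wp-e_3)$ with $e_1=\wp(\tfrac12)$, $e_2=\wp(\tfrac\tau2)$, $e_3=\wp(\tfrac{1+\tau}2)$. If $|e_i|=|e_j|$ for some distinct $i,j\in\{1,2,3\}$, then the $j$-invariant $j(\tau)=1728\,\dfrac{g_2^3}{g_2^3-27g_3^2}$ is real. *)

theory Defs
  imports "HOL-Analysis.Analysis"
begin

definition lattice :: "complex \<Rightarrow> complex set" where
  "lattice \<tau> = {of_int m + of_int n * \<tau> | m n. True}"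

text \<open>Weierstrass wp-function of Lambda(1,tau) (the series converges absolutely
  for Im tau > 0 and z outside the lattice, so the unordered sum is the usual one).\<close>
definition wp :: "complex \<Rightarrow> complex \<Rightarrow> complex" where
  "wp \<tau> z = 1 / z^2 + infsum (\<lambda>\<omega>. 1 / (z - \<omega>)^2 - 1 / \<omega>^2) (lattice \<tau> - {0})"

definition g2 :: "complex \<Rightarrow> complex" where
  "g2 \<tau> = 60 * infsum (\<lambda>\<omega>. 1 / \<omega>^4) (lattice \<tau> - {0})"

definition g3 :: "complex \<Rightarrow> complex" where
  "g3 \<tau> = 140 * infsum (\<lambda>\<omega>. 1 / \<omega>^6) (lattice \<tau> - {0})"

definition j_invariant :: "complex \<Rightarrow> complex" where
  "j_invariant \<tau> = 1728 * (g2 \<tau>)^3 / ((g2 \<tau>)^3 - 27 * (g3 \<tau>)^2)"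

definition e_val :: "complex \<Rightarrow> nat \<Rightarrow> complex" where
  "e_val \<tau> i = (if i = 1 then wp \<tau> (1/2)
               else if i = 2 then wp \<tau> (\<tau>/2)
               else wp \<tau> ((1 + \<tau>)/2))"

end

theory Submission
  imports Defs "HOL-Complex_Analysis.Complex_Analysis"
begin


locale wlat =
  fixes \<tau> :: complex
  assumes Imtau: "Im \<tau> > 0"
begin

definition lp :: "int \<times> int \<Rightarrow> complex" where
  "lp = (\<lambda>(m,n). of_int m + of_int n * \<tau>)"

lemma lp_simp: "lp (m,n) = of_int m + of_int n * \<tau>"
  by (simp add: lp_def)

lemma L_eq: "lattice \<tau> = range lp"
  by (auto simp: lattice_def lp_def)

lemma Im_lp: "Im (lp (m,n)) = of_int n * Im \<tau>" by (simp add: lp_simp)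
lemma Re_lp: "Re (lp (m,n)) = of_int m + of_int n * Re \<tau>" by (simp add: lp_simp)

lemma lp_eq_iff: "lp (m,n) = lp (m',n') \<longleftrightarrow> m = m' \<and> n = n'"
proof
  assume h: "lp (m,n) = lp (m',n')"
  then have "Im (lp (m,n)) = Im (lp (m',n'))" by simp
  then have "n = n'" using Imtau by (simp add: Im_lp del: lp_simp)
  with h show "m = m' \<and> n = n'" by (simp add: lp_simp)
qed simp

lemma lp_inj: "inj lp"
  by (auto simp: inj_on_def lp_eq_iff simp del: lp_simp)

lemma lp_zero_iff: "lp (m,n) = 0 \<longleftrightarrow> m = 0 \<and> n = 0"
  using lp_eq_iff[of m n 0 0] by (simp add: lp_simp)

lemma L0_eq: "lattice \<tau> - {0} = lp ` (UNIV - {(0,0)})"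
  using lp_zero_iff by (auto simp: L_eq)

lemma L_memI: "of_int m + of_int n * \<tau> \<in> lattice \<tau>"
  by (auto simp: lattice_def)

lemma L_memE: assumes "x \<in> lattice \<tau>" obtains m n where "x = of_int m + of_int n * \<tau>"
  using assms by (auto simp: lattice_def)

lemma L_0[simp]: "0 \<in> lattice \<tau>" using L_memI[of 0 0] by simp
lemma L_1[simp]: "1 \<in> lattice \<tau>" using L_memI[of 1 0] by simp
lemma L_tau[simp]: "\<tau> \<in> lattice \<tau>" using L_memI[of 0 1] by simp

lemma L_add: "a \<in> lattice \<tau> \<Longrightarrow> b \<in> lattice \<tau> \<Longrightarrow> a + b \<in> lattice \<tau>"
proof -
  assume "a \<in> lattice \<tau>" "b \<in> lattice \<tau>"
  then obtain m n m' n' where "a = of_int m + of_int n * \<tau>" "b = of_int m' + of_int n' * \<tau>"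
    by (metis L_memE)
  then have "a + b = of_int (m+m') + of_int (n+n') * \<tau>" by (simp add: algebra_simps)
  then show ?thesis using L_memI by (metis of_int_add)
qed

lemma L_uminus: "a \<in> lattice \<tau> \<Longrightarrow> -a \<in> lattice \<tau>"
proof -
  assume "a \<in> lattice \<tau>"
  then obtain m n where "a = of_int m + of_int n * \<tau>" by (metis L_memE)
  then have "-a = of_int (-m) + of_int (-n) * \<tau>" by (simp add: algebra_simps)
  then show ?thesis using L_memI by metis
qed

lemma L_diff: "a \<in> lattice \<tau> \<Longrightarrow> b \<in> lattice \<tau> \<Longrightarrow> a - b \<in> lattice \<tau>"
  using L_add[of a "-b"] L_uminus[of b] by simp

lemma L_uminus_iff: "-a \<in> lattice \<tau> \<longleftrightarrow> a \<in> lattice \<tau>"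
  using L_uminus[of a] L_uminus[of "-a"] by auto

lemma L_shift_iff: "w \<in> lattice \<tau> \<Longrightarrow> z + w \<in> lattice \<tau> \<longleftrightarrow> z \<in> lattice \<tau>"
  using L_add L_diff by (metis add_diff_cancel_right')

definition cL :: real where "cL = Im \<tau> / (Im \<tau> + \<bar>Re \<tau>\<bar> + 1)"

lemma cL_pos: "cL > 0" using Imtau by (simp add: cL_def)

lemma lp_lower: "cmod (lp (m,n)) \<ge> cL * (\<bar>of_int m\<bar> + \<bar>of_int n\<bar>)"
proof -
  define a where "a = Im \<tau>"
  define b where "b = \<bar>Re \<tau>\<bar>"
  define w where "w = cmod (lp (m,n))"
  have a: "a > 0" using Imtau a_def by simp
  have b: "b \<ge> 0" by (simp add: b_def)
  have 1: "\<bar>of_int n\<bar> * a \<le> w"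
    using abs_Im_le_cmod[of "lp (m,n)"] a by (simp add: a_def w_def abs_mult Im_lp)
  have "\<bar>of_int m + of_int n * Re \<tau>\<bar> \<le> w"
    using abs_Re_le_cmod[of "lp (m,n)"] by (simp add: w_def Re_lp)
  moreover have "\<bar>of_int n * Re \<tau>\<bar> = \<bar>of_int n\<bar> * b" by (simp add: b_def abs_mult)
  ultimately have 2: "\<bar>of_int m\<bar> \<le> w + \<bar>of_int n\<bar> * b"
    by arith
  have 3: "a * (\<bar>of_int n\<bar> * b) \<le> w * b"
    using mult_right_mono[OF 1 b] by (simp add: algebra_simps)
  have "a * (\<bar>of_int m\<bar> + \<bar>of_int n\<bar>) \<le> w * (a + b + 1)"
  proof -
    have "a * \<bar>of_int m\<bar> \<le> a * (w + \<bar>of_int n\<bar> * b)"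
      using 2 a by (intro mult_left_mono) auto
    then show ?thesis using 1 3 by (simp add: algebra_simps)
  qed
  then have "(\<bar>of_int m\<bar> + \<bar>of_int n\<bar>) * (a / (a + b + 1)) \<le> w"
    using a b by (simp add: field_simps)
  then show ?thesis by (simp add: cL_def a_def b_def w_def mult.commute)
qed

lemma L0_lower: "\<omega> \<in> lattice \<tau> - {0} \<Longrightarrow> cmod \<omega> \<ge> cL"
proof -
  assume "\<omega> \<in> lattice \<tau> - {0}"
  then obtain m n where w: "\<omega> = lp (m,n)" "(m,n) \<noteq> (0,0)" by (auto simp: L0_eq)
  then have "\<bar>real_of_int m\<bar> + \<bar>real_of_int n\<bar> \<ge> 1" by auto
  then have "cL * 1 \<le> cL * (\<bar>of_int m\<bar> + \<bar>of_int n\<bar>)" using cL_pos by (intro mult_left_mono) auto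
  then show ?thesis using lp_lower[of m n] w by simp
qed

lemma L0_pos: "\<omega> \<in> lattice \<tau> - {0} \<Longrightarrow> cmod \<omega> > 0"
  using L0_lower cL_pos by fastforce

lemma L_sep: "a \<in> lattice \<tau> \<Longrightarrow> b \<in> lattice \<tau> \<Longrightarrow> a \<noteq> b \<Longrightarrow> dist a b \<ge> cL"
  using L0_lower[of "a - b"] L_diff by (simp add: dist_norm)

lemma closed_L: "closed (lattice \<tau>)"
  by (rule discrete_imp_closed[OF cL_pos]) (metis L_sep dist_commute not_less)

lemma closed_L0: "closed (lattice \<tau> - {0})"
  by (rule discrete_imp_closed[OF cL_pos]) (metis Diff_iff L_sep dist_commute not_less)

lemma countable_L: "countable (lattice \<tau>)"
  unfolding L_eq by simp

lemma open_compl_L: "open (- lattice \<tau>)"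
  using closed_L by (simp add: open_Compl)

lemma connected_compl_L: "connected (- lattice \<tau>)"
proof -
  have "connected (UNIV - lattice \<tau>)"
    by (rule connected_open_diff_countable) (auto simp: countable_L)
  then show ?thesis by (simp add: Compl_eq_Diff_UNIV)
qed

end


definition fZ :: "int \<times> int \<Rightarrow> real" where
  "fZ = (\<lambda>(m,n). 1 / (\<bar>of_int m\<bar> + \<bar>of_int n\<bar>) ^ 3)"

definition BZ :: "nat \<Rightarrow> (int \<times> int) set" where
  "BZ N = {-int N..int N} \<times> {-int N..int N}"

lemma fZ_nonneg: "fZ x \<ge> 0" by (cases x) (auto simp: fZ_def)

lemma finite_BZ: "finite (BZ N)" by (simp add: BZ_def)

lemma card_BZ: "card (BZ N) = (2*N+1)^2"
proof -
  have "card {-int N..int N} = 2*N+1" by simp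
  then show ?thesis by (simp add: BZ_def card_cartesian_product power2_eq_square)
qed

lemma BZ_mono: "BZ N \<subseteq> BZ (Suc N)" by (auto simp: BZ_def)

lemma shell_bound:
  assumes "x \<in> BZ (Suc N) - BZ N"
  shows "fZ x \<le> 1 / (real (Suc N))^3"
proof -
  obtain m n where x: "x = (m,n)" by (cases x)
  from assms have "\<bar>m\<bar> = int (Suc N) \<or> \<bar>n\<bar> = int (Suc N)" by (auto simp: BZ_def x)
  then have "real (Suc N) \<le> \<bar>of_int m\<bar> + \<bar>of_int n\<bar>" by auto
  then have "(real (Suc N))^3 \<le> (\<bar>of_int m\<bar> + \<bar>of_int n\<bar>)^3"
    by (intro power_mono) auto
  then have "1 / (\<bar>of_int m\<bar> + \<bar>of_int n\<bar>) ^ 3 \<le> 1 / (real (Suc N))^3"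
    by (intro divide_left_mono) auto
  then show ?thesis by (simp add: fZ_def x)
qed

lemma sum_BZ_bound: "sum fZ (BZ N - {(0,0)}) \<le> 16 - 16 / real (N+1)"
proof (induction N)
  case 0
  have e: "BZ 0 - {(0,0)} = {}" by (auto simp: BZ_def)
  show ?case by (simp only: e) simp
next
  case (Suc N)
  have split: "BZ (Suc N) - {(0,0)} = (BZ N - {(0,0)}) \<union> (BZ (Suc N) - BZ N)"
    using BZ_mono[of N] by (auto simp: BZ_def)
  have disj: "(BZ N - {(0,0)}) \<inter> (BZ (Suc N) - BZ N) = {}" by auto
  have card: "card (BZ (Suc N) - BZ N) = 8 * (N+1)"
  proof -
    have "card (BZ (Suc N) - BZ N) = card (BZ (Suc N)) - card (BZ N)"
      by (intro card_Diff_subset finite_BZ BZ_mono)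
    also have "\<dots> = 8 * (N+1)"
    proof -
      have "(2*Suc N+1)^2 = (2*N+1)^2 + 8*(N+1)" by (simp add: power2_eq_square algebra_simps)
      then show ?thesis by (simp only: card_BZ)
    qed
    finally show ?thesis .
  qed
  have "sum fZ (BZ (Suc N) - BZ N) \<le> real (card (BZ (Suc N) - BZ N)) * (1 / (real (Suc N))^3)"
    using shell_bound by (intro sum_bounded_above) auto
  also have "\<dots> = 8 / (real N + 1)^2"
  proof -
    define x where "x = real N + 1"
    have x: "x > 0" by (simp add: x_def)
    have c: "real (card (BZ (Suc N) - BZ N)) = 8 * x" by (simp add: card x_def)
    have s: "real (Suc N) = x" by (simp add: x_def)
    have eq: "8 * x * (1 / x^3) = 8 / x^2" using x by (simp add: field_simps power3_eq_cube power2_eq_square)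
    show ?thesis unfolding c s x_def[symmetric] by (rule eq)
  qed
  finally have sh: "sum fZ (BZ (Suc N) - BZ N) \<le> 8 / (real N + 1)^2" .
  have "sum fZ (BZ (Suc N) - {(0,0)}) = sum fZ (BZ N - {(0,0)}) + sum fZ (BZ (Suc N) - BZ N)"
    unfolding split by (intro sum.union_disjoint) (auto simp: finite_BZ)
  also have "\<dots> \<le> 16 - 16 / real (N+1) + 8 / (real N + 1)^2"
    using Suc.IH sh by linarith
  also have "\<dots> \<le> 16 - 16 / real (Suc N + 1)"
  proof -
    define x where "x = real N + 1"
    have x: "x \<ge> 1" by (simp add: x_def)
    have x0: "x \<noteq> 0" "x + 1 \<noteq> 0" using x by auto
    have "16 / x - 16 / (x + 1) - 8 / x^2 = (16 * x * (x+1) - 16 * x^2 - 8 * (x+1)) / (x^2 * (x + 1))"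
      using x0 by (simp add: divide_simps power2_eq_square) (simp add: algebra_simps)
    also have "16 * x * (x+1) - 16 * x^2 - 8 * (x+1) = 8 * (x - 1)"
      by (simp add: algebra_simps power2_eq_square)
    finally have "16 / x - 16 / (x + 1) - 8 / x^2 = 8 * (x - 1) / (x^2 * (x + 1))" .
    moreover have "8 * (x - 1) / (x^2 * (x + 1)) \<ge> 0" using x by simp
    ultimately have "16 - 16 / x + 8 / x^2 \<le> 16 - 16 / (x + 1)" by linarith
    moreover have "real (N+1) = x" "real (Suc N + 1) = x + 1" by (simp_all add: x_def)
    ultimately show ?thesis unfolding x_def[symmetric] by (simp add: add.commute)
  qed
  finally show ?case .
qed

lemma fZ_summable: "fZ summable_on (UNIV - {(0,0)})"
proof (rule nonneg_bdd_above_summable_on)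
  show "bdd_above (sum fZ ` {F. F \<subseteq> UNIV - {(0, 0)} \<and> finite F})"
  proof (rule bdd_aboveI)
    fix s assume "s \<in> sum fZ ` {F. F \<subseteq> UNIV - {(0, 0)} \<and> finite F}"
    then obtain F where F: "finite F" "F \<subseteq> UNIV - {(0,0)}" and s: "s = sum fZ F" by auto
    define N where "N = Max (insert 0 ((\<lambda>(m,n). nat (max \<bar>m\<bar> \<bar>n\<bar>)) ` F))"
    have "F \<subseteq> BZ N - {(0,0)}"
    proof
      fix x assume "x \<in> F"
      obtain m n where x: "x = (m,n)" by (cases x)
      have "nat (max \<bar>m\<bar> \<bar>n\<bar>) \<le> N" unfolding N_def
        using \<open>x \<in> F\<close> F(1) x by (intro Max_ge) auto
      then show "x \<in> BZ N - {(0,0)}" using F(2) \<open>x \<in> F\<close> x by (auto simp: BZ_def)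
    qed
    then have "sum fZ F \<le> sum fZ (BZ N - {(0,0)})"
      by (intro sum_mono2) (auto simp: finite_BZ fZ_nonneg)
    also have "\<dots> \<le> 16" using sum_BZ_bound[of N] by (smt (verit) divide_nonneg_nonneg of_nat_0_le_iff)
    finally show "s \<le> 16" using s by simp
  qed
qed (simp add: fZ_nonneg)

context wlat begin

definition S3 :: real where "S3 = infsum (\<lambda>\<omega>. 1 / cmod \<omega> ^ 3) (lattice \<tau> - {0})"

lemma inv3_summable: "(\<lambda>\<omega>. 1 / cmod \<omega> ^ 3) summable_on (lattice \<tau> - {0})"
proof -
  have "((\<lambda>\<omega>. 1 / cmod \<omega> ^ 3) \<circ> lp) summable_on (UNIV - {(0,0)})"
  proof (rule summable_on_comparison_test)
    show "(\<lambda>x. (1 / cL^3) * fZ x) summable_on (UNIV - {(0,0)})"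
      by (intro summable_on_cmult_right fZ_summable)
    fix x :: "int \<times> int" assume x: "x \<in> UNIV - {(0,0)}"
    obtain m n where xe: "x = (m,n)" by (cases x)
    have pos: "\<bar>real_of_int m\<bar> + \<bar>real_of_int n\<bar> > 0" using x xe by auto
    have le: "cL * (\<bar>of_int m\<bar> + \<bar>of_int n\<bar>) \<le> cmod (lp (m,n))" by (rule lp_lower)
    have p2: "cL * (\<bar>of_int m\<bar> + \<bar>of_int n\<bar>) > 0" using pos cL_pos by simp
    have "(cL * (\<bar>of_int m\<bar> + \<bar>of_int n\<bar>))^3 \<le> cmod (lp (m,n)) ^ 3"
      using le p2 by (intro power_mono) auto
    then have "1 / cmod (lp (m,n)) ^ 3 \<le> 1 / (cL * (\<bar>of_int m\<bar> + \<bar>of_int n\<bar>))^3"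
    proof (rule divide_left_mono)
      have "cmod (lp (m,n)) > 0" using le p2 by linarith
      then show "0 < cmod (lp (m, n)) ^ 3 * (cL * (\<bar>real_of_int m\<bar> + \<bar>real_of_int n\<bar>)) ^ 3"
        using p2 by simp
    qed simp
    then show "((\<lambda>\<omega>. 1 / cmod \<omega> ^ 3) \<circ> lp) x \<le> (1 / cL^3) * fZ x"
      by (simp add: xe fZ_def power_mult_distrib)
    show "0 \<le> ((\<lambda>\<omega>. 1 / cmod \<omega> ^ 3) \<circ> lp) x" by simp
  qed
  then show ?thesis unfolding L0_eq
    by (subst summable_on_reindex) (auto intro: inj_on_subset[OF lp_inj])
qed

lemma S3_nonneg: "S3 \<ge> 0" unfolding S3_def by (intro infsum_nonneg) auto

lemma L0_bound:
  fixes F :: "complex \<Rightarrow> complex"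
  assumes "\<And>\<omega>. \<omega> \<in> lattice \<tau> - {0} \<Longrightarrow> norm (F \<omega>) \<le> K / cmod \<omega> ^ 3"
  shows "F summable_on (lattice \<tau> - {0})" "norm (infsum F (lattice \<tau> - {0})) \<le> K * S3"
proof -
  have s: "(\<lambda>\<omega>. K * (1 / cmod \<omega> ^ 3)) summable_on (lattice \<tau> - {0})"
    by (intro summable_on_cmult_right inv3_summable)
  have ns: "(\<lambda>\<omega>. norm (F \<omega>)) summable_on (lattice \<tau> - {0})"
    by (rule summable_on_comparison_test[OF s]) (use assms in auto)
  then show "F summable_on (lattice \<tau> - {0})"
    by (simp add: summable_on_iff_abs_summable_on_complex)
  have "norm (infsum F (lattice \<tau> - {0})) \<le> infsum (\<lambda>\<omega>. norm (F \<omega>)) (lattice \<tau> - {0})"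
    by (rule norm_infsum_bound) (use ns in simp)
  also have "\<dots> \<le> infsum (\<lambda>\<omega>. K * (1 / cmod \<omega> ^ 3)) (lattice \<tau> - {0})"
    by (rule infsum_mono[OF ns s]) (use assms in auto)
  also have "\<dots> = K * S3" unfolding S3_def
    by (rule infsum_cmult_right) (use inv3_summable in auto)
  finally show "norm (infsum F (lattice \<tau> - {0})) \<le> K * S3" .
qed

lemma pow_bound:
  assumes "\<omega> \<in> lattice \<tau> - {0}" "k \<ge> 3"
  shows "1 / cmod \<omega> ^ k \<le> (1 / cL) ^ (k - 3) / cmod \<omega> ^ 3"
proof -
  have w: "cmod \<omega> \<ge> cL" "cmod \<omega> > 0" using L0_lower L0_pos assms by auto
  have "cL ^ (k-3) \<le> cmod \<omega> ^ (k-3)" using w cL_pos by (intro power_mono) auto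
  moreover have "cmod \<omega> ^ k = cmod \<omega> ^ (k-3) * cmod \<omega> ^ 3"
    using assms(2) by (simp flip: power_add)
  ultimately show ?thesis using w cL_pos
    by (simp add: field_simps power_divide)
qed

lemma bij_uminus_L0: "bij_betw uminus (lattice \<tau> - {0}) (lattice \<tau> - {0})"
  by (rule bij_betwI[of _ _ _ uminus]) (auto simp: L_uminus_iff)

lemma bij_uminus_L: "bij_betw uminus (lattice \<tau>) (lattice \<tau>)"
  by (rule bij_betwI[of _ _ _ uminus]) (auto simp: L_uminus_iff)

lemma bij_shift_L: "w \<in> lattice \<tau> \<Longrightarrow> bij_betw (\<lambda>x. x + w) (lattice \<tau>) (lattice \<tau>)"
  by (rule bij_betwI[of _ _ _ "\<lambda>x. x - w"]) (auto simp: L_shift_iff L_diff)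

lemma odd_sum_zero:
  fixes F :: "complex \<Rightarrow> complex"
  assumes "\<And>\<omega>. F (-\<omega>) = - F \<omega>"
  shows "infsum F (lattice \<tau> - {0}) = 0"
proof -
  have "infsum F (lattice \<tau> - {0}) = infsum (\<lambda>\<omega>. F (-\<omega>)) (lattice \<tau> - {0})"
    using infsum_reindex_bij_betw[OF bij_uminus_L0, of F] by simp
  also have "\<dots> = - infsum F (lattice \<tau> - {0})"
    by (simp add: assms infsum_uminus)
  finally show ?thesis by simp
qed

end


lemma infsum_diff_c:
  fixes f g :: "'a \<Rightarrow> complex"
  assumes "f summable_on A" "g summable_on A"
  shows "infsum (\<lambda>x. f x - g x) A = infsum f A - infsum g A"
proof -
  have "(\<lambda>x. - g x) summable_on A" using assms(2) by (simp add: summable_on_uminus)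
  then have "infsum (\<lambda>x. f x + - g x) A = infsum f A + infsum (\<lambda>x. - g x) A"
    by (intro infsum_add assms)
  then show ?thesis by (simp add: infsum_uminus)
qed

lemma summable_on_diff_c:
  fixes f g :: "'a \<Rightarrow> complex"
  assumes "f summable_on A" "g summable_on A"
  shows "(\<lambda>x. f x - g x) summable_on A"
proof -
  have "(\<lambda>x. - g x) summable_on A" using assms(2) by (simp add: summable_on_uminus)
  then have "(\<lambda>x. f x + - g x) summable_on A" by (intro summable_on_add assms)
  then show ?thesis by simp
qed

context wlat begin

definition dd :: "complex \<Rightarrow> real" where "dd z = infdist z (lattice \<tau> - {0})"
definition MM :: "complex \<Rightarrow> real" where "MM z = 1 + cmod z / dd z"

lemma L0_nonempty: "lattice \<tau> - {0} \<noteq> {}"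
proof -
  have "(1::complex) \<in> lattice \<tau> - {0}" by simp
  then show ?thesis by blast
qed

lemma dd_pos: "z \<notin> lattice \<tau> - {0} \<Longrightarrow> dd z > 0"
  unfolding dd_def by (intro infdist_pos_not_in_closed closed_L0 L0_nonempty)

lemma MM_ge1: "z \<notin> lattice \<tau> - {0} \<Longrightarrow> MM z \<ge> 1"
  using dd_pos[of z] by (simp add: MM_def)

lemma dist_facts:
  assumes z: "z \<notin> lattice \<tau> - {0}" and w: "\<omega> \<in> lattice \<tau> - {0}"
  shows "cmod (\<omega> - z) \<ge> dd z" "cmod \<omega> \<le> MM z * cmod (\<omega> - z)"
proof -
  show 1: "cmod (\<omega> - z) \<ge> dd z"
    using infdist_le[OF w, of z] by (simp add: dd_def dist_norm norm_minus_commute)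
  have d: "dd z > 0" using dd_pos[OF z] .
  have "cmod \<omega> \<le> cmod (\<omega> - z) + cmod z" by (metis diff_add_cancel norm_triangle_ineq)
  also have "cmod z = cmod z / dd z * dd z" using d by simp
  also have "\<dots> \<le> cmod z / dd z * cmod (\<omega> - z)"
    using 1 d by (intro mult_left_mono) auto
  finally show "cmod \<omega> \<le> MM z * cmod (\<omega> - z)" by (simp add: MM_def algebra_simps)
qed

lemma inv_pow_bound:
  assumes z: "z \<notin> lattice \<tau> - {0}" and w: "\<omega> \<in> lattice \<tau> - {0}"
  shows "1 / cmod (\<omega> - z) ^ k \<le> MM z ^ k / cmod \<omega> ^ k"
proof -
  have p: "cmod (\<omega> - z) > 0" using dist_facts(1)[OF z w] dd_pos[OF z] by linarith
  have p2: "cmod \<omega> > 0" using L0_pos w by auto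
  have "cmod \<omega> ^ k \<le> (MM z * cmod (\<omega> - z)) ^ k"
    using dist_facts(2)[OF z w] by (intro power_mono) auto
  then show ?thesis using p p2 by (simp add: field_simps power_mult_distrib)
qed

definition tt :: "complex \<Rightarrow> complex \<Rightarrow> complex" where
  "tt z \<omega> = 1 / (z - \<omega>)^2 - 1 / \<omega>^2"

definition hh :: "complex \<Rightarrow> complex" where
  "hh z = infsum (tt z) (lattice \<tau> - {0})"

definition h1 :: "complex \<Rightarrow> complex" where
  "h1 z = infsum (\<lambda>\<omega>. -2 / (z - \<omega>)^3) (lattice \<tau> - {0})"

lemma wp_eq: "wp \<tau> z = 1 / z^2 + hh z"
  unfolding wp_def hh_def tt_def[abs_def] by simp

lemma tt_bound:
  assumes z: "z \<notin> lattice \<tau> - {0}" and w: "\<omega> \<in> lattice \<tau> - {0}"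
  shows "norm (tt z \<omega>) \<le> (cmod z * (2 + cmod z / cL) * MM z ^ 2) / cmod \<omega> ^ 3"
proof -
  have p: "cmod (\<omega> - z) > 0" using dist_facts(1)[OF z w] dd_pos[OF z] by linarith
  have p2: "cmod \<omega> > 0" and cl: "cmod \<omega> \<ge> cL" using L0_pos L0_lower w by auto
  have nz: "\<omega> \<noteq> 0" "z - \<omega> \<noteq> 0" "\<omega> - z \<noteq> 0" using p p2 by auto
  have eq: "tt z \<omega> = z * (2 * \<omega> - z) * (1 / \<omega>^2) * (1 / (\<omega> - z)^2)"
    using nz unfolding tt_def by (simp add: field_simps) algebra
  have n1: "cmod (2 * \<omega> - z) \<le> (2 + cmod z / cL) * cmod \<omega>"
  proof -
    have "cmod (2 * \<omega> - z) \<le> 2 * cmod \<omega> + cmod z"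
      by (metis norm_mult norm_numeral norm_triangle_ineq4)
    moreover have "cmod z \<le> cmod z / cL * cmod \<omega>"
    proof -
      have "cmod z = cmod z / cL * cL" using cL_pos by simp
      also have "\<dots> \<le> cmod z / cL * cmod \<omega>" using cl cL_pos by (intro mult_left_mono) auto
      finally show ?thesis .
    qed
    ultimately show ?thesis by (simp add: algebra_simps)
  qed
  have n2: "1 / cmod (\<omega> - z) ^ 2 \<le> MM z ^ 2 / cmod \<omega> ^ 2" by (rule inv_pow_bound[OF z w])
  have "norm (tt z \<omega>) = cmod z * cmod (2 * \<omega> - z) * (1 / cmod \<omega> ^ 2) * (1 / cmod (\<omega> - z) ^ 2)"
    by (simp add: eq norm_mult norm_divide norm_power)
  also have "\<dots> \<le> cmod z * ((2 + cmod z / cL) * cmod \<omega>) * (1 / cmod \<omega> ^ 2) * (MM z ^ 2 / cmod \<omega> ^ 2)"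
    using cL_pos by (intro mult_mono n1 n2 mult_nonneg_nonneg) auto
  also have "\<dots> = (cmod z * (2 + cmod z / cL) * MM z ^ 2) / cmod \<omega> ^ 3"
    using p2 by (simp add: field_simps power2_eq_square power3_eq_cube)
  finally show ?thesis .
qed

lemma tt_summable: "z \<notin> lattice \<tau> - {0} \<Longrightarrow> tt z summable_on (lattice \<tau> - {0})"
  using L0_bound(1)[OF tt_bound] by blast

lemma d3_bound:
  assumes z: "z \<notin> lattice \<tau> - {0}" and w: "\<omega> \<in> lattice \<tau> - {0}"
  shows "norm (-2 / (z - \<omega>)^3) \<le> (2 * MM z ^ 3) / cmod \<omega> ^ 3"
proof -
  have "norm (-2 / (z - \<omega>)^3) = 2 * (1 / cmod (\<omega> - z) ^ 3)"
    by (simp add: norm_divide norm_power norm_minus_commute)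
  also have "\<dots> \<le> 2 * (MM z ^ 3 / cmod \<omega> ^ 3)"
    by (intro mult_left_mono inv_pow_bound[OF z w]) auto
  finally show ?thesis by simp
qed

lemma d3_summable: "z \<notin> lattice \<tau> - {0} \<Longrightarrow> (\<lambda>\<omega>. -2 / (z - \<omega>)^3) summable_on (lattice \<tau> - {0})"
  using L0_bound(1)[OF d3_bound] by blast

lemma rem_identity:
  fixes A \<delta> :: complex
  assumes "A \<noteq> 0" "A - \<delta> \<noteq> 0"
  shows "1 / (A - \<delta>)^2 - 1 / A^2 - 2 * \<delta> / A^3 = \<delta>^2 * (3 * A - 2 * \<delta>) / (A^3 * (A - \<delta>)^2)"
  using assms by (simp add: field_simps) algebra

lemma rem_bound:
  fixes A \<delta> :: complex
  assumes "cmod \<delta> \<le> cmod A / 2" "A \<noteq> 0"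
  shows "norm (\<delta>^2 * (3 * A - 2 * \<delta>) / (A^3 * (A - \<delta>)^2)) \<le> 16 * cmod \<delta> ^ 2 / cmod A ^ 4"
proof -
  have a: "cmod A > 0" using assms by simp
  have n1: "cmod (3 * A - 2 * \<delta>) \<le> 4 * cmod A"
  proof -
    have "cmod (3 * A - 2 * \<delta>) \<le> cmod (3 * A) + cmod (2 * \<delta>)" by (rule norm_triangle_ineq4)
    also have "\<dots> = 3 * cmod A + 2 * cmod \<delta>" by (simp add: norm_mult)
    finally show ?thesis using assms by linarith
  qed
  have n2: "cmod (A - \<delta>) \<ge> cmod A / 2"
    using norm_triangle_ineq2[of A \<delta>] assms by linarith
  have "norm (\<delta>^2 * (3 * A - 2 * \<delta>) / (A^3 * (A - \<delta>)^2))
      = cmod \<delta> ^ 2 * cmod (3 * A - 2 * \<delta>) / (cmod A ^ 3 * cmod (A - \<delta>) ^ 2)"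
    by (simp add: norm_mult norm_divide norm_power)
  also have "\<dots> \<le> cmod \<delta> ^ 2 * (4 * cmod A) / (cmod A ^ 3 * (cmod A / 2) ^ 2)"
    using a n2 by (intro frac_le mult_left_mono n1 mult_pos_pos mult_mono power_mono) auto
  also have "\<dots> = 16 * cmod \<delta> ^ 2 / cmod A ^ 4"
    using a by (simp add: field_simps power2_eq_square power3_eq_cube power4_eq_xxxx)
  finally show ?thesis .
qed

lemma hh_deriv:
  assumes z: "z \<notin> lattice \<tau> - {0}"
  shows "(hh has_field_derivative h1 z) (at z)"
proof -
  define d where "d = dd z"
  define M where "M = MM z"
  have d: "d > 0" using dd_pos[OF z] d_def by simp
  have M: "M \<ge> 1" using MM_ge1[OF z] M_def by simp
  define K where "K = 16 * M ^ 4 / cL * S3"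
  have key: "norm ((hh y - hh z) / (y - z) - h1 z) \<le> K * cmod (y - z)"
    if y: "y \<noteq> z" "cmod (y - z) < d / 2" for y
  proof -
    define \<delta> where "\<delta> = y - z"
    have \<delta>0: "\<delta> \<noteq> 0" using y by (simp add: \<delta>_def)
    have yL: "y \<notin> lattice \<tau> - {0}"
    proof
      assume "y \<in> lattice \<tau> - {0}"
      then have "cmod (y - z) \<ge> d" using dist_facts(1)[OF z] d_def by blast
      with y d show False by linarith
    qed
    have termeq: "tt y \<omega> - tt z \<omega> - \<delta> * (-2 / (z - \<omega>)^3)
        = \<delta>^2 * (3 * (\<omega> - z) - 2 * \<delta>) / ((\<omega> - z)^3 * ((\<omega> - z) - \<delta>)^2)"
      if w: "\<omega> \<in> lattice \<tau> - {0}" for \<omega>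
    proof -
      have A: "\<omega> - z \<noteq> 0" using z w by auto
      have B: "(\<omega> - z) - \<delta> \<noteq> 0" using yL w by (auto simp: \<delta>_def)
      have "tt y \<omega> - tt z \<omega> - \<delta> * (-2 / (z - \<omega>)^3)
          = 1 / ((\<omega> - z) - \<delta>)^2 - 1 / (\<omega> - z)^2 - 2 * \<delta> / (\<omega> - z)^3"
      proof -
        have "(y - \<omega>)^2 = ((\<omega> - z) - \<delta>)^2" by (simp add: \<delta>_def power2_eq_square algebra_simps)
        moreover have "(z - \<omega>)^2 = (\<omega> - z)^2" by (simp add: power2_eq_square algebra_simps)
        moreover have "(z - \<omega>)^3 = - ((\<omega> - z)^3)" by (simp add: power3_eq_cube algebra_simps)
        ultimately show ?thesis by (simp add: tt_def)
      qed
      also have "\<dots> = \<delta>^2 * (3 * (\<omega> - z) - 2 * \<delta>) / ((\<omega> - z)^3 * ((\<omega> - z) - \<delta>)^2)"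
        by (rule rem_identity[OF A B])
      finally show ?thesis .
    qed
    have tbound: "norm (tt y \<omega> - tt z \<omega> - \<delta> * (-2 / (z - \<omega>)^3)) \<le> (16 * cmod \<delta> ^ 2 * M ^ 4 / cL) / cmod \<omega> ^ 3"
      if w: "\<omega> \<in> lattice \<tau> - {0}" for \<omega>
    proof -
      have A: "\<omega> - z \<noteq> 0" using z w by auto
      have dA: "cmod (\<omega> - z) \<ge> d" using dist_facts(1)[OF z w] d_def by simp
      have "cmod \<delta> \<le> cmod (\<omega> - z) / 2" using y dA by (simp add: \<delta>_def)
      then have "norm (tt y \<omega> - tt z \<omega> - \<delta> * (-2 / (z - \<omega>)^3)) \<le> 16 * cmod \<delta> ^ 2 / cmod (\<omega> - z) ^ 4"
        using termeq[OF w] rem_bound[OF _ A] by simp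
      also have "\<dots> = 16 * cmod \<delta> ^ 2 * (1 / cmod (\<omega> - z) ^ 4)" by simp
      also have "\<dots> \<le> 16 * cmod \<delta> ^ 2 * (M ^ 4 / cmod \<omega> ^ 4)"
        using inv_pow_bound[OF z w, of 4] M_def by (intro mult_left_mono) auto
      also have "\<dots> \<le> 16 * cmod \<delta> ^ 2 * (M ^ 4 * ((1 / cL) ^ (4 - 3) / cmod \<omega> ^ 3))"
      proof -
        have "1 / cmod \<omega> ^ 4 \<le> (1 / cL) ^ (4 - 3) / cmod \<omega> ^ 3" by (rule pow_bound[OF w]) simp
        then have "M ^ 4 * (1 / cmod \<omega> ^ 4) \<le> M ^ 4 * ((1 / cL) ^ (4 - 3) / cmod \<omega> ^ 3)"
          using M by (intro mult_left_mono) auto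
        then show ?thesis by (intro mult_left_mono) auto
      qed
      also have "\<dots> = (16 * cmod \<delta> ^ 2 * M ^ 4 / cL) / cmod \<omega> ^ 3" by simp
      finally show ?thesis .
    qed
    have s1: "tt y summable_on (lattice \<tau> - {0})" by (rule tt_summable[OF yL])
    have s2: "tt z summable_on (lattice \<tau> - {0})" by (rule tt_summable[OF z])
    have s3: "(\<lambda>\<omega>. \<delta> * (-2 / (z - \<omega>)^3)) summable_on (lattice \<tau> - {0})"
      by (intro summable_on_cmult_right d3_summable[OF z])
    have "hh y - hh z - \<delta> * h1 z = infsum (\<lambda>\<omega>. tt y \<omega> - tt z \<omega> - \<delta> * (-2 / (z - \<omega>)^3)) (lattice \<tau> - {0})"
    proof -
      have "infsum (\<lambda>\<omega>. tt y \<omega> - tt z \<omega> - \<delta> * (-2 / (z - \<omega>)^3)) (lattice \<tau> - {0})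
          = infsum (\<lambda>\<omega>. tt y \<omega> - tt z \<omega>) (lattice \<tau> - {0}) - infsum (\<lambda>\<omega>. \<delta> * (-2 / (z - \<omega>)^3)) (lattice \<tau> - {0})"
        by (intro infsum_diff_c summable_on_diff_c s1 s2 s3)
      also have "\<dots> = hh y - hh z - \<delta> * h1 z"
        unfolding hh_def h1_def
        by (subst infsum_diff_c[OF s1 s2], subst infsum_cmult_right) (use d3_summable[OF z] in auto)
      finally show ?thesis by simp
    qed
    then have "norm (hh y - hh z - \<delta> * h1 z) \<le> (16 * cmod \<delta> ^ 2 * M ^ 4 / cL) * S3"
      using L0_bound(2)[OF tbound] by simp
    moreover have "(hh y - hh z) / (y - z) - h1 z = (hh y - hh z - \<delta> * h1 z) / \<delta>"
      using \<delta>0 by (simp add: \<delta>_def field_simps)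
    ultimately have "norm ((hh y - hh z) / (y - z) - h1 z) \<le> (16 * cmod \<delta> ^ 2 * M ^ 4 / cL) * S3 / cmod \<delta>"
      unfolding norm_divide by (metis divide_right_mono norm_divide norm_ge_zero)
    also have "\<dots> = K * cmod (y - z)"
      using \<delta>0 by (simp add: K_def \<delta>_def power2_eq_square field_simps)
    finally show ?thesis .
  qed
  have ev: "eventually (\<lambda>y. norm ((hh y - hh z) / (y - z) - h1 z) \<le> K * cmod (y - z)) (at z)"
  proof -
    have "eventually (\<lambda>y. y \<noteq> z \<and> dist y z < d/2) (at z)"
      unfolding eventually_at using d by (intro exI[of _ "d/2"]) auto
    then show ?thesis
      by eventually_elim (use key in \<open>auto simp: dist_norm norm_minus_commute\<close>)
  qed
  have lim0: "((\<lambda>y. K * cmod (y - z)) \<longlongrightarrow> 0) (at z)"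
  proof -
    have "((\<lambda>y. K * cmod (y - z)) \<longlongrightarrow> K * cmod (z - z)) (at z)"
      by (intro tendsto_intros)
    then show ?thesis by simp
  qed
  have "((\<lambda>y. (hh y - hh z) / (y - z) - h1 z) \<longlongrightarrow> 0) (at z)"
    by (rule Lim_null_comparison[OF ev lim0])
  then have "((\<lambda>y. (hh y - hh z) / (y - z)) \<longlongrightarrow> h1 z) (at z)"
    by (simp add: tendsto_minus_cancel_left Lim_null[symmetric])
  then show ?thesis by (simp add: has_field_derivative_iff)
qed

end


lemma per_nat:
  fixes F :: "complex \<Rightarrow> 'b"
  assumes "\<And>z. F (z + p) = F z"
  shows "F (z + of_nat n * p) = F z"
proof (induction n arbitrary: z)
  case 0 then show ?case by simp
next
  case (Suc n)
  have "F (z + of_nat (Suc n) * p) = F ((z + of_nat n * p) + p)" by (simp add: algebra_simps)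
  also have "\<dots> = F (z + of_nat n * p)" by (rule assms)
  finally show ?case using Suc by simp
qed

lemma per_int:
  fixes F :: "complex \<Rightarrow> 'b"
  assumes "\<And>z. F (z + p) = F z"
  shows "F (z + of_int k * p) = F z"
proof (cases "k \<ge> 0")
  case True
  then obtain n where "k = int n" by (metis nonneg_int_cases)
  then show ?thesis using per_nat[where F=F and p=p, OF assms, of z n] by simp
next
  case False
  then obtain n where k: "k = - int n" by (metis linorder_not_le nonpos_int_cases order_less_imp_le)
  have "F ((z - of_nat n * p) + of_nat n * p) = F (z - of_nat n * p)" by (rule per_nat[where F=F and p=p, OF assms])
  then show ?thesis using k by simp
qed

context wlat begin

lemma per_L:
  fixes F :: "complex \<Rightarrow> 'b"
  assumes "\<And>z. F (z + 1) = F z" "\<And>z. F (z + \<tau>) = F z" "w \<in> lattice \<tau>"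
  shows "F (z + w) = F z"
proof -
  obtain m n where w: "w = of_int m + of_int n * \<tau>" using assms(3) by (metis L_memE)
  have "F ((z + of_int n * \<tau>) + of_int m * 1) = F (z + of_int n * \<tau>)"
    by (rule per_int) (use assms(1) in simp)
  also have "\<dots> = F z" by (rule per_int) (use assms(2) in simp)
  finally show ?thesis by (simp add: w algebra_simps)
qed

lemma half_L:
  assumes "x \<in> lattice \<tau>" "2 * x = of_int m + of_int n * \<tau>"
  shows "even m \<and> even n"
proof -
  obtain a b where x: "x = of_int a + of_int b * \<tau>" using assms(1) by (metis L_memE)
  have "lp (2*a, 2*b) = lp (m, n)" using assms(2) by (simp add: lp_simp x algebra_simps)
  then have "m = 2*a" "n = 2*b" by (simp_all add: lp_eq_iff)
  then show ?thesis by simp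
qed

lemma not_L_half:
  assumes "odd m \<or> odd n"
  shows "(of_int m + of_int n * \<tau>) / 2 \<notin> lattice \<tau>"
  using half_L[of "(of_int m + of_int n * \<tau>) / 2" m n] assms by auto

definition wpd :: "complex \<Rightarrow> complex" where
  "wpd z = -2 / z^3 + h1 z"

lemma inv_sq_deriv: "z \<noteq> 0 \<Longrightarrow> ((\<lambda>z. 1 / z^2) has_field_derivative (-2 / z^3)) (at z)"
  by (auto intro!: derivative_eq_intros simp: field_simps power2_eq_square power3_eq_cube)

lemma wp_deriv:
  assumes "z \<notin> lattice \<tau>"
  shows "(wp \<tau> has_field_derivative wpd z) (at z)"
proof -
  have z0: "z \<noteq> 0" using assms by auto
  have zL: "z \<notin> lattice \<tau> - {0}" using assms by auto
  have "((\<lambda>z. 1 / z^2 + hh z) has_field_derivative (-2 / z^3 + h1 z)) (at z)"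
    by (intro DERIV_add inv_sq_deriv hh_deriv z0 zL)
  moreover have "wp \<tau> = (\<lambda>z. 1 / z^2 + hh z)" by (rule ext) (rule wp_eq)
  ultimately show ?thesis by (simp add: wpd_def)
qed

lemma wp_holo: "wp \<tau> holomorphic_on (- lattice \<tau>)"
  using wp_deriv by (auto simp: holomorphic_on_def field_differentiable_def at_within_open[OF _ open_compl_L]
    intro: has_field_derivative_at_within)

lemma wpd_sumL:
  assumes "z \<notin> lattice \<tau>"
  shows "wpd z = infsum (\<lambda>\<omega>. -2 / (z - \<omega>)^3) (lattice \<tau>)"
proof -
  have zL: "z \<notin> lattice \<tau> - {0}" using assms by auto
  have "lattice \<tau> = insert 0 (lattice \<tau> - {0})" by auto
  then have "infsum (\<lambda>\<omega>. -2 / (z - \<omega>)^3) (lattice \<tau>) = infsum (\<lambda>\<omega>. -2 / (z - \<omega>)^3) (insert 0 (lattice \<tau> - {0}))"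
    by simp
  also have "\<dots> = -2 / (z - 0)^3 + h1 z"
    unfolding h1_def by (rule infsum_insert[OF d3_summable[OF zL]]) simp
  finally show ?thesis by (simp add: wpd_def)
qed

lemma wpd_periodic:
  assumes "z \<notin> lattice \<tau>" "w \<in> lattice \<tau>"
  shows "wpd (z + w) = wpd z"
proof -
  have zw: "z + w \<notin> lattice \<tau>" using assms L_shift_iff by auto
  have "wpd (z + w) = infsum (\<lambda>\<omega>. -2 / (z + w - \<omega>)^3) (lattice \<tau>)" by (rule wpd_sumL[OF zw])
  also have "\<dots> = infsum (\<lambda>\<omega>. -2 / (z + w - (\<omega> + w))^3) (lattice \<tau>)"
    using infsum_reindex_bij_betw[OF bij_shift_L[OF assms(2)], of "\<lambda>\<omega>. -2 / (z + w - \<omega>)^3"] by simp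
  also have "\<dots> = wpd z" using wpd_sumL[OF assms(1)] by simp
  finally show ?thesis .
qed

lemma wpd_odd:
  assumes "z \<notin> lattice \<tau>"
  shows "wpd (-z) = - wpd z"
proof -
  have mz: "-z \<notin> lattice \<tau>" using assms L_uminus_iff by auto
  have "wpd (-z) = infsum (\<lambda>\<omega>. -2 / (-z - \<omega>)^3) (lattice \<tau>)" by (rule wpd_sumL[OF mz])
  also have "\<dots> = infsum (\<lambda>\<omega>. -2 / (-z - (-\<omega>))^3) (lattice \<tau>)"
    using infsum_reindex_bij_betw[OF bij_uminus_L, of "\<lambda>\<omega>. -2 / (-z - \<omega>)^3"] by simp
  also have "\<dots> = infsum (\<lambda>\<omega>. - (-2 / (z - \<omega>)^3)) (lattice \<tau>)"
  proof (rule infsum_cong)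
    fix \<omega> :: complex
    have "(-z - (-\<omega>))^3 = - ((z - \<omega>)^3)" by (simp add: power3_eq_cube algebra_simps)
    then show "-2 / (-z - (-\<omega>))^3 = - (-2 / (z - \<omega>)^3)" by simp
  qed
  also have "\<dots> = - wpd z" by (simp add: infsum_uminus wpd_sumL[OF assms])
  finally show ?thesis .
qed

lemma wp_even: "wp \<tau> (-z) = wp \<tau> z"
proof -
  have "hh (-z) = infsum (\<lambda>\<omega>. tt (-z) (-\<omega>)) (lattice \<tau> - {0})"
    unfolding hh_def using infsum_reindex_bij_betw[OF bij_uminus_L0, of "tt (-z)"] by simp
  also have "\<dots> = hh z" unfolding hh_def
  proof (rule infsum_cong)
    fix \<omega> :: complex
    have "(-z - (-\<omega>))^2 = (z - \<omega>)^2" by (simp add: power2_eq_square algebra_simps)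
    then show "tt (-z) (-\<omega>) = tt z \<omega>" by (simp add: tt_def)
  qed
  finally show ?thesis by (simp add: wp_eq)
qed

lemma wp_periodic_gen:
  assumes w: "w \<in> lattice \<tau>" and hw: "-w/2 \<notin> lattice \<tau>" and z: "z \<notin> lattice \<tau>"
  shows "wp \<tau> (z + w) = wp \<tau> z"
proof -
  define S where "S = - lattice \<tau>"
  define f where "f = (\<lambda>z. wp \<tau> (z + w) - wp \<tau> z)"
  have inS: "x + w \<in> S" if "x \<in> S" for x using that w L_shift_iff by (auto simp: S_def)
  have der: "(f has_field_derivative 0) (at x)" if "x \<in> S" for x
  proof -
    have "x \<notin> lattice \<tau>" "x + w \<notin> lattice \<tau>" using that inS[OF that] by (auto simp: S_def)
    then have "((\<lambda>x. wp \<tau> (x + w)) has_field_derivative wpd (x + w)) (at x)"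
      using wp_deriv DERIV_shift by blast
    then have "(f has_field_derivative wpd (x + w) - wpd x) (at x)"
      unfolding f_def using wp_deriv \<open>x \<notin> lattice \<tau>\<close> by (intro DERIV_diff) auto
    moreover have "wpd (x + w) = wpd x" using wpd_periodic \<open>x \<notin> lattice \<tau>\<close> w by blast
    ultimately show ?thesis by simp
  qed
  have cont: "continuous_on S f"
    using der by (intro continuous_at_imp_continuous_on) (blast intro: DERIV_isCont)
  obtain c where c: "\<And>x. x \<in> S \<Longrightarrow> f x = c"
    using DERIV_zero_connected_constant[of S "{}" f] connected_compl_L open_compl_L cont der
    unfolding S_def by auto
  have "f (-w/2) = wp \<tau> (w/2) - wp \<tau> (-w/2)" by (simp add: f_def)
  also have "\<dots> = 0" using wp_even[of "w/2"] by simp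
  finally have "c = 0" using c[of "-w/2"] hw by (simp add: S_def)
  then show ?thesis using c[of z] z by (simp add: f_def S_def)
qed

lemma wp_per1: "z \<notin> lattice \<tau> \<Longrightarrow> wp \<tau> (z + 1) = wp \<tau> z"
proof (rule wp_periodic_gen)
  show "- 1 / 2 \<notin> lattice \<tau>"
    using not_L_half[of "-1" 0] by simp
qed simp

lemma wp_pertau: "z \<notin> lattice \<tau> \<Longrightarrow> wp \<tau> (z + \<tau>) = wp \<tau> z"
proof (rule wp_periodic_gen)
  show "- \<tau> / 2 \<notin> lattice \<tau>"
    using not_L_half[of 0 "-1"] by simp
qed simp

end


lemma Bfun_add': "Bfun f F \<Longrightarrow> Bfun g F \<Longrightarrow> Bfun (\<lambda>x. f x + g x) F"
  for f g :: "'a \<Rightarrow> 'b::real_normed_vector"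
proof -
  assume "Bfun f F" "Bfun g F"
  then obtain A B where "eventually (\<lambda>x. norm (f x) \<le> A) F" "eventually (\<lambda>x. norm (g x) \<le> B) F"
    by (metis BfunE)
  then have "eventually (\<lambda>x. norm (f x + g x) \<le> A + B) F"
    by eventually_elim (metis add_mono norm_triangle_ineq order_trans)
  then show ?thesis by (rule BfunI)
qed

lemma Bfun_mult': "Bfun f F \<Longrightarrow> Bfun g F \<Longrightarrow> Bfun (\<lambda>x. f x * g x) F"
  for f g :: "'a \<Rightarrow> 'b::real_normed_algebra"
proof -
  assume "Bfun f F" "Bfun g F"
  then obtain A B where AB: "A > 0" "B > 0" and ev: "eventually (\<lambda>x. norm (f x) \<le> A) F" "eventually (\<lambda>x. norm (g x) \<le> B) F"
    by (metis BfunE)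
  from ev have "eventually (\<lambda>x. norm (f x * g x) \<le> A * B) F"
    by eventually_elim (metis mult_mono' norm_ge_zero norm_mult_ineq order_trans)
  then show ?thesis by (rule BfunI)
qed

lemma Bfun_uminus': "Bfun f F \<Longrightarrow> Bfun (\<lambda>x. - f x) F"
  for f :: "'a \<Rightarrow> 'b::real_normed_vector"
  by (simp add: Bfun_def)

lemma Bfun_diff': "Bfun f F \<Longrightarrow> Bfun g F \<Longrightarrow> Bfun (\<lambda>x. f x - g x) F"
  for f g :: "'a \<Rightarrow> 'b::real_normed_vector"
  using Bfun_add'[of f F "\<lambda>x. - g x"] Bfun_uminus' by auto

lemma Bfun_power': "Bfun f F \<Longrightarrow> Bfun (\<lambda>x. f x ^ n) F"
  for f :: "'a \<Rightarrow> 'b::real_normed_algebra_1"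
  by (induction n) (auto intro: Bfun_mult')

lemma Bfun_id_at0: "Bfun (\<lambda>z::complex. z) (at 0)"
proof (rule BfunI)
  show "eventually (\<lambda>z::complex. norm z \<le> 1) (at 0)"
    unfolding eventually_at by (intro exI[of _ 1]) auto
qed

lemma Zfun_sq_at0: "Zfun (\<lambda>z::complex. z^2) (at 0)"
proof -
  have "((\<lambda>z::complex. z^2) \<longlongrightarrow> 0^2) (at 0)" by (intro tendsto_intros)
  then show ?thesis by (simp add: tendsto_Zfun_iff)
qed

context wlat begin

definition G4 :: complex where "G4 = infsum (\<lambda>\<omega>. 1 / \<omega>^4) (lattice \<tau> - {0})"
definition G6 :: complex where "G6 = infsum (\<lambda>\<omega>. 1 / \<omega>^6) (lattice \<tau> - {0})"

lemma g2_eq: "g2 \<tau> = 60 * G4" by (simp add: g2_def G4_def)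
lemma g3_eq: "g3 \<tau> = 140 * G6" by (simp add: g3_def G6_def)

lemma invpow_summable:
  assumes "k \<ge> 3"
  shows "(\<lambda>\<omega>. 1 / \<omega>^k) summable_on (lattice \<tau> - {0})"
proof (rule L0_bound(1))
  fix \<omega> assume w: "\<omega> \<in> lattice \<tau> - {0}"
  show "norm (1 / \<omega>^k) \<le> (1 / cL) ^ (k - 3) / cmod \<omega> ^ 3"
    using pow_bound[OF w assms] by (simp add: norm_divide norm_power)
qed

definition rr :: "complex \<Rightarrow> complex \<Rightarrow> complex" where
  "rr z \<omega> = (7 * \<omega> - 6 * z) / (\<omega>^7 * (\<omega> - z)^2)"
definition rr2 :: "complex \<Rightarrow> complex \<Rightarrow> complex" where
  "rr2 z \<omega> = 2 * (\<omega>^2 + 5 * \<omega> * (\<omega> - z) + 15 * (\<omega> - z)^2) / (\<omega>^7 * (\<omega> - z)^3)"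
definition RR :: "complex \<Rightarrow> complex" where "RR z = infsum (rr z) (lattice \<tau> - {0})"
definition RR2 :: "complex \<Rightarrow> complex" where "RR2 z = infsum (rr2 z) (lattice \<tau> - {0})"

lemma small_facts:
  assumes z: "cmod z \<le> cL / 2" and w: "\<omega> \<in> lattice \<tau> - {0}"
  shows "cmod z \<le> cmod \<omega> / 2" "cmod (\<omega> - z) \<ge> cmod \<omega> / 2" "cmod (\<omega> - z) \<le> 3/2 * cmod \<omega>"
    "cmod \<omega> > 0"
proof -
  have wl: "cmod \<omega> \<ge> cL" using L0_lower w by auto
  show 1: "cmod z \<le> cmod \<omega> / 2" using z wl by linarith
  show "cmod (\<omega> - z) \<ge> cmod \<omega> / 2" using norm_triangle_ineq2[of \<omega> z] 1 by linarith
  show "cmod (\<omega> - z) \<le> 3/2 * cmod \<omega>" using norm_triangle_ineq4[of \<omega> z] 1 by linarith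
  show "cmod \<omega> > 0" using L0_pos w by auto
qed

lemma rr_bound:
  assumes z: "cmod z \<le> cL / 2" and w: "\<omega> \<in> lattice \<tau> - {0}"
  shows "norm (rr z \<omega>) \<le> (40 * (1 / cL) ^ 5) / cmod \<omega> ^ 3"
proof -
  note f = small_facts[OF z w]
  have n1: "cmod (7 * \<omega> - 6 * z) \<le> 10 * cmod \<omega>"
  proof -
    have "cmod (7 * \<omega> - 6 * z) \<le> cmod (7 * \<omega>) + cmod (6 * z)" by (rule norm_triangle_ineq4)
    also have "\<dots> = 7 * cmod \<omega> + 6 * cmod z" by (simp add: norm_mult)
    finally show ?thesis using f by linarith
  qed
  have "norm (rr z \<omega>) = cmod (7 * \<omega> - 6 * z) / (cmod \<omega> ^ 7 * cmod (\<omega> - z) ^ 2)"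
    by (simp add: rr_def norm_divide norm_mult norm_power)
  also have "\<dots> \<le> (10 * cmod \<omega>) / (cmod \<omega> ^ 7 * (cmod \<omega> / 2) ^ 2)"
  proof (rule frac_le)
    show "0 < cmod \<omega> ^ 7 * (cmod \<omega> / 2) ^ 2" using f by simp
    show "cmod \<omega> ^ 7 * (cmod \<omega> / 2) ^ 2 \<le> cmod \<omega> ^ 7 * cmod (\<omega> - z) ^ 2"
      using f by (intro mult_left_mono power_mono) auto
  qed (use n1 in auto)
  also have "\<dots> = 40 * (1 / cmod \<omega> ^ 8)"
    using f by (simp add: field_simps eval_nat_numeral)
  also have "\<dots> \<le> 40 * ((1 / cL) ^ (8 - 3) / cmod \<omega> ^ 3)"
    by (intro mult_left_mono pow_bound[OF w]) auto
  finally show ?thesis by simp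
qed

lemma rr2_bound:
  assumes z: "cmod z \<le> cL / 2" and w: "\<omega> \<in> lattice \<tau> - {0}"
  shows "norm (rr2 z \<omega>) \<le> (700 * (1 / cL) ^ 5) / cmod \<omega> ^ 3"
proof -
  note f = small_facts[OF z w]
  define W where "W = cmod \<omega>"
  have W: "W > 0" using f W_def by simp
  have n1: "cmod (\<omega>^2 + 5 * \<omega> * (\<omega> - z) + 15 * (\<omega> - z)^2) \<le> 43 * W^2"
  proof -
    have "cmod (\<omega>^2 + 5 * \<omega> * (\<omega> - z) + 15 * (\<omega> - z)^2)
        \<le> cmod (\<omega>^2) + cmod (5 * \<omega> * (\<omega> - z)) + cmod (15 * (\<omega> - z)^2)"
    proof -
      have t1: "cmod (\<omega>^2 + 5 * \<omega> * (\<omega> - z) + 15 * (\<omega> - z)^2) \<le> cmod (\<omega>^2 + 5 * \<omega> * (\<omega> - z)) + cmod (15 * (\<omega> - z)^2)"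
        by (rule norm_triangle_ineq)
      have t2: "cmod (\<omega>^2 + 5 * \<omega> * (\<omega> - z)) \<le> cmod (\<omega>^2) + cmod (5 * \<omega> * (\<omega> - z))"
        by (rule norm_triangle_ineq)
      show ?thesis using t1 t2 by linarith
    qed
    also have "\<dots> = W^2 + 5 * W * cmod (\<omega> - z) + 15 * cmod (\<omega> - z)^2"
      by (simp add: norm_mult norm_power W_def)
    also have "\<dots> \<le> W^2 + 5 * W * (3/2 * W) + 15 * (3/2 * W)^2"
    proof -
      have a: "5 * W * cmod (\<omega> - z) \<le> 5 * W * (3/2 * W)"
        using f W by (intro mult_left_mono) (auto simp: W_def)
      have "cmod (\<omega> - z)^2 \<le> (3/2 * W)^2"
        using f by (intro power_mono) (auto simp: W_def)
      then have b: "15 * cmod (\<omega> - z)^2 \<le> 15 * (3/2 * W)^2" by simp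
      show ?thesis using a b by linarith
    qed
    also have "\<dots> \<le> 43 * W^2" by (simp add: power2_eq_square algebra_simps)
    finally show ?thesis .
  qed
  have "norm (rr2 z \<omega>) = 2 * cmod (\<omega>^2 + 5 * \<omega> * (\<omega> - z) + 15 * (\<omega> - z)^2) / (W ^ 7 * cmod (\<omega> - z) ^ 3)"
    unfolding rr2_def norm_divide norm_mult norm_power W_def by simp
  also have "\<dots> \<le> (2 * (43 * W^2)) / (W ^ 7 * (W / 2) ^ 3)"
  proof (rule frac_le)
    show "0 < W ^ 7 * (W / 2) ^ 3" using W by simp
    show "W ^ 7 * (W / 2) ^ 3 \<le> W ^ 7 * cmod (\<omega> - z) ^ 3"
      using f W by (intro mult_left_mono power_mono) (auto simp: W_def)
  qed (use n1 in auto)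
  also have "\<dots> = 688 * (1 / W ^ 8)"
    using W by (simp add: field_simps eval_nat_numeral)
  also have "\<dots> \<le> 700 * (1 / W ^ 8)" using W by (intro mult_right_mono) auto
  also have "\<dots> \<le> 700 * ((1 / cL) ^ (8 - 3) / cmod \<omega> ^ 3)"
    unfolding W_def by (intro mult_left_mono pow_bound[OF w]) auto
  finally show ?thesis by simp
qed

lemma RR_bound: "cmod z \<le> cL / 2 \<Longrightarrow> rr z summable_on (lattice \<tau> - {0}) \<and> norm (RR z) \<le> 40 * (1 / cL) ^ 5 * S3"
proof -
  assume z: "cmod z \<le> cL / 2"
  have "\<And>\<omega>. \<omega> \<in> lattice \<tau> - {0} \<Longrightarrow> norm (rr z \<omega>) \<le> (40 * (1 / cL) ^ 5) / cmod \<omega> ^ 3"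
    by (rule rr_bound[OF z])
  from L0_bound[OF this] show ?thesis unfolding RR_def by blast
qed

lemma RR2_bound: "cmod z \<le> cL / 2 \<Longrightarrow> rr2 z summable_on (lattice \<tau> - {0}) \<and> norm (RR2 z) \<le> 700 * (1 / cL) ^ 5 * S3"
proof -
  assume z: "cmod z \<le> cL / 2"
  have "\<And>\<omega>. \<omega> \<in> lattice \<tau> - {0} \<Longrightarrow> norm (rr2 z \<omega>) \<le> (700 * (1 / cL) ^ 5) / cmod \<omega> ^ 3"
    by (rule rr2_bound[OF z])
  from L0_bound[OF this] show ?thesis unfolding RR2_def by blast
qed

lemma tt_expand:
  assumes "\<omega> \<noteq> 0" "\<omega> - z \<noteq> 0"
  shows "tt z \<omega> = (2 * z * (1 / \<omega>^3) + 4 * z^3 * (1 / \<omega>^5) + 6 * z^5 * (1 / \<omega>^7))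
     + (3 * z^2 * (1 / \<omega>^4) + (5 * z^4 * (1 / \<omega>^6) + z^6 * rr z \<omega>))"
proof -
  have e: "(z - \<omega>)^2 = (\<omega> - z)^2" by algebra
  have d: "\<omega>^7 * (\<omega> - z)^2 \<noteq> 0" using assms by simp
  show ?thesis unfolding tt_def rr_def e using assms d
    apply (simp add: divide_simps)
    apply algebra
    done
qed

lemma d3_expand:
  assumes "\<omega> \<noteq> 0" "\<omega> - z \<noteq> 0"
  shows "-2 / (z - \<omega>)^3 = (2 * (1 / \<omega>^3) + 12 * z^2 * (1 / \<omega>^5) + 30 * z^4 * (1 / \<omega>^7))
     + (6 * z * (1 / \<omega>^4) + (20 * z^3 * (1 / \<omega>^6) + z^5 * rr2 z \<omega>))"
proof -
  have e: "-2 / (z - \<omega>)^3 = 2 / (\<omega> - z)^3"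
  proof -
    have "(z - \<omega>)^3 = - ((\<omega> - z)^3)" by algebra
    then show ?thesis by simp
  qed
  have d: "\<omega>^7 * (\<omega> - z)^3 \<noteq> 0" using assms by simp
  show ?thesis unfolding rr2_def e using assms d
    apply (simp add: divide_simps)
    apply algebra
    done
qed

lemma split_sum:
  fixes A :: "complex set" and F Q P1 P2 P3 :: "complex \<Rightarrow> complex"
  assumes eq: "\<And>\<omega>. \<omega> \<in> A \<Longrightarrow> F \<omega> = Q \<omega> + (P1 \<omega> + (P2 \<omega> + P3 \<omega>))"
    and sF: "F summable_on A" and s1: "P1 summable_on A" and s2: "P2 summable_on A" and s3: "P3 summable_on A"
    and q0: "infsum Q A = 0"
  shows "infsum F A = infsum P1 A + infsum P2 A + infsum P3 A"
proof -
  have s23: "(\<lambda>\<omega>. P2 \<omega> + P3 \<omega>) summable_on A" by (intro summable_on_add s2 s3)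
  have sP: "(\<lambda>\<omega>. P1 \<omega> + (P2 \<omega> + P3 \<omega>)) summable_on A" by (intro summable_on_add s1 s23)
  have sQ: "Q summable_on A"
  proof -
    have 1: "(\<lambda>\<omega>. F \<omega> - (P1 \<omega> + (P2 \<omega> + P3 \<omega>))) summable_on A" by (intro summable_on_diff_c sF sP)
    have 2: "\<And>\<omega>. \<omega> \<in> A \<Longrightarrow> F \<omega> - (P1 \<omega> + (P2 \<omega> + P3 \<omega>)) = Q \<omega>" using eq by simp
    show ?thesis by (rule iffD1[OF summable_on_cong[OF 2] 1])
  qed
  have "infsum F A = infsum (\<lambda>\<omega>. Q \<omega> + (P1 \<omega> + (P2 \<omega> + P3 \<omega>))) A"
    using eq by (intro infsum_cong) auto
  also have "\<dots> = infsum Q A + (infsum P1 A + (infsum P2 A + infsum P3 A))"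
    by (simp add: infsum_add sQ sP s1 s23 s2 s3)
  finally show ?thesis using q0 by simp
qed

lemma hh_expand:
  assumes z: "cmod z \<le> cL / 2"
  shows "hh z = 3 * G4 * z^2 + 5 * G6 * z^4 + z^6 * RR z"
proof -
  have zL: "z \<notin> lattice \<tau> - {0}"
  proof
    assume "z \<in> lattice \<tau> - {0}"
    then have "cmod z \<ge> cL" using L0_lower by auto
    with z cL_pos show False by linarith
  qed
  have "hh z = infsum (\<lambda>\<omega>. 3 * z^2 * (1 / \<omega>^4)) (lattice \<tau> - {0})
      + infsum (\<lambda>\<omega>. 5 * z^4 * (1 / \<omega>^6)) (lattice \<tau> - {0})
      + infsum (\<lambda>\<omega>. z^6 * rr z \<omega>) (lattice \<tau> - {0})"
    unfolding hh_def
  proof (rule split_sum)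
    show "tt z summable_on (lattice \<tau> - {0})" by (rule tt_summable[OF zL])
    show "(\<lambda>\<omega>. 3 * z^2 * (1 / \<omega>^4)) summable_on (lattice \<tau> - {0})"
      by (intro summable_on_cmult_right invpow_summable) auto
    show "(\<lambda>\<omega>. 5 * z^4 * (1 / \<omega>^6)) summable_on (lattice \<tau> - {0})"
      by (intro summable_on_cmult_right invpow_summable) auto
    show "(\<lambda>\<omega>. z^6 * rr z \<omega>) summable_on (lattice \<tau> - {0})"
      using RR_bound[OF z] by (intro summable_on_cmult_right) auto
    show "infsum (\<lambda>\<omega>. 2 * z * (1 / \<omega>^3) + 4 * z^3 * (1 / \<omega>^5) + 6 * z^5 * (1 / \<omega>^7)) (lattice \<tau> - {0}) = 0"
      by (rule odd_sum_zero) (simp add: power_minus_odd algebra_simps)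
    fix \<omega> assume w: "\<omega> \<in> lattice \<tau> - {0}"
    then have "\<omega> \<noteq> 0" "\<omega> - z \<noteq> 0" using zL by auto
    then show "tt z \<omega> = (2 * z * (1 / \<omega>^3) + 4 * z^3 * (1 / \<omega>^5) + 6 * z^5 * (1 / \<omega>^7))
     + (3 * z^2 * (1 / \<omega>^4) + (5 * z^4 * (1 / \<omega>^6) + z^6 * rr z \<omega>))"
      by (rule tt_expand)
  qed
  also have "\<dots> = 3 * G4 * z^2 + 5 * G6 * z^4 + z^6 * RR z"
  proof -
    have e1: "infsum (\<lambda>\<omega>. 3 * z^2 * (1 / \<omega>^4)) (lattice \<tau> - {0}) = 3 * z^2 * G4"
      unfolding G4_def by (rule infsum_cmult_right) (use invpow_summable in auto)
    have e2: "infsum (\<lambda>\<omega>. 5 * z^4 * (1 / \<omega>^6)) (lattice \<tau> - {0}) = 5 * z^4 * G6"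
      unfolding G6_def by (rule infsum_cmult_right) (use invpow_summable in auto)
    have e3: "infsum (\<lambda>\<omega>. z^6 * rr z \<omega>) (lattice \<tau> - {0}) = z^6 * RR z"
      unfolding RR_def by (rule infsum_cmult_right) (use RR_bound[OF z] in auto)
    show ?thesis unfolding e1 e2 e3 by (simp add: algebra_simps)
  qed
  finally show ?thesis .
qed

lemma h1_expand:
  assumes z: "cmod z \<le> cL / 2"
  shows "h1 z = 6 * G4 * z + 20 * G6 * z^3 + z^5 * RR2 z"
proof -
  have zL: "z \<notin> lattice \<tau> - {0}"
  proof
    assume "z \<in> lattice \<tau> - {0}"
    then have "cmod z \<ge> cL" using L0_lower by auto
    with z cL_pos show False by linarith
  qed
  have "h1 z = infsum (\<lambda>\<omega>. 6 * z * (1 / \<omega>^4)) (lattice \<tau> - {0})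
      + infsum (\<lambda>\<omega>. 20 * z^3 * (1 / \<omega>^6)) (lattice \<tau> - {0})
      + infsum (\<lambda>\<omega>. z^5 * rr2 z \<omega>) (lattice \<tau> - {0})"
    unfolding h1_def
  proof (rule split_sum)
    show "(\<lambda>\<omega>. -2 / (z - \<omega>)^3) summable_on (lattice \<tau> - {0})" by (rule d3_summable[OF zL])
    show "(\<lambda>\<omega>. 6 * z * (1 / \<omega>^4)) summable_on (lattice \<tau> - {0})"
      by (intro summable_on_cmult_right invpow_summable) auto
    show "(\<lambda>\<omega>. 20 * z^3 * (1 / \<omega>^6)) summable_on (lattice \<tau> - {0})"
      by (intro summable_on_cmult_right invpow_summable) auto
    show "(\<lambda>\<omega>. z^5 * rr2 z \<omega>) summable_on (lattice \<tau> - {0})"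
      using RR2_bound[OF z] by (intro summable_on_cmult_right) auto
    show "infsum (\<lambda>\<omega>. 2 * (1 / \<omega>^3) + 12 * z^2 * (1 / \<omega>^5) + 30 * z^4 * (1 / \<omega>^7)) (lattice \<tau> - {0}) = 0"
      by (rule odd_sum_zero) (simp add: power_minus_odd algebra_simps)
    fix \<omega> assume w: "\<omega> \<in> lattice \<tau> - {0}"
    then have "\<omega> \<noteq> 0" "\<omega> - z \<noteq> 0" using zL by auto
    then show "-2 / (z - \<omega>)^3 = (2 * (1 / \<omega>^3) + 12 * z^2 * (1 / \<omega>^5) + 30 * z^4 * (1 / \<omega>^7))
     + (6 * z * (1 / \<omega>^4) + (20 * z^3 * (1 / \<omega>^6) + z^5 * rr2 z \<omega>))"
      by (rule d3_expand)
  qed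
  also have "\<dots> = 6 * G4 * z + 20 * G6 * z^3 + z^5 * RR2 z"
  proof -
    have e1: "infsum (\<lambda>\<omega>. 6 * z * (1 / \<omega>^4)) (lattice \<tau> - {0}) = 6 * z * G4"
      unfolding G4_def by (rule infsum_cmult_right) (use invpow_summable in auto)
    have e2: "infsum (\<lambda>\<omega>. 20 * z^3 * (1 / \<omega>^6)) (lattice \<tau> - {0}) = 20 * z^3 * G6"
      unfolding G6_def by (rule infsum_cmult_right) (use invpow_summable in auto)
    have e3: "infsum (\<lambda>\<omega>. z^5 * rr2 z \<omega>) (lattice \<tau> - {0}) = z^5 * RR2 z"
      unfolding RR2_def by (rule infsum_cmult_right) (use RR2_bound[OF z] in auto)
    show ?thesis unfolding e1 e2 e3 by (simp add: algebra_simps)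
  qed
  finally show ?thesis .
qed

end


lemma fode_alg:
  fixes z a b R R2 :: complex
  assumes "z \<noteq> 0"
  shows "(-2/z^3 + z*(2*a + 4*b*z^2 + z^4*R2))^2 - 4*(1/z^2 + z^2*(a + b*z^2 + z^4*R))^3
      + 20*a*(1/z^2 + z^2*(a + b*z^2 + z^4*R)) + 28*b
    = z^2 * (-4*R2 - 12*R + (2*a + 4*b*z^2 + z^4*R2)^2 - 12*(a + b*z^2 + z^4*R)^2
        - 4*z^4*(a + b*z^2 + z^4*R)^3 + 20*a*(a + b*z^2 + z^4*R))"
  using assms
  apply (simp add: divide_simps)
  apply algebra
  done

context wlat begin

definition fode :: "complex \<Rightarrow> complex" where
  "fode z = (wpd z)^2 - 4 * (wp \<tau> z)^3 + g2 \<tau> * wp \<tau> z + g3 \<tau>"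

definition FF :: "complex \<Rightarrow> complex" where
  "FF z = (if z \<in> lattice \<tau> then 0 else fode z)"

lemma small_notin_L: "z \<noteq> 0 \<Longrightarrow> cmod z < cL \<Longrightarrow> z \<notin> lattice \<tau>"
  using L0_lower by force

lemma ev_small: "eventually (\<lambda>z. z \<noteq> 0 \<and> cmod z \<le> cL / 2) (at (0::complex))"
  unfolding eventually_at using cL_pos by (intro exI[of _ "cL/2"]) auto

lemma wp_small: "z \<noteq> 0 \<Longrightarrow> cmod z \<le> cL / 2 \<Longrightarrow>
   wp \<tau> z = 1/z^2 + z^2*(3*G4 + 5*G6*z^2 + z^4*RR z)"
  using hh_expand[of z] by (simp add: wp_eq algebra_simps power2_eq_square power4_eq_xxxx eval_nat_numeral)

lemma wpd_small: "z \<noteq> 0 \<Longrightarrow> cmod z \<le> cL / 2 \<Longrightarrow>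
   wpd z = -2/z^3 + z*(2*(3*G4) + 4*(5*G6)*z^2 + z^4*RR2 z)"
  using h1_expand[of z] by (simp add: wpd_def algebra_simps eval_nat_numeral)

lemma Bfun_RR: "Bfun RR (at 0)"
  by (rule BfunI, rule eventually_mono[OF ev_small]) (use RR_bound in blast)

lemma Bfun_RR2: "Bfun RR2 (at 0)"
  by (rule BfunI, rule eventually_mono[OF ev_small]) (use RR2_bound in blast)

lemma fode_lim0: "(fode \<longlongrightarrow> 0) (at 0)"
proof -
  define a where "a = 3 * G4"
  define b where "b = 5 * G6"
  define \<Phi> where "\<Phi> = (\<lambda>z. -4*RR2 z - 12*RR z + (2*a + 4*b*z^2 + z^4*RR2 z)^2 - 12*(a + b*z^2 + z^4*RR z)^2
        - 4*z^4*(a + b*z^2 + z^4*RR z)^3 + 20*a*(a + b*z^2 + z^4*RR z))"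
  have eq: "eventually (\<lambda>z. fode z = z^2 * \<Phi> z) (at 0)"
  proof (rule eventually_mono[OF ev_small])
    fix z :: complex assume z: "z \<noteq> 0 \<and> cmod z \<le> cL / 2"
    have g2: "g2 \<tau> = 20 * a" and g3: "g3 \<tau> = 28 * b" by (simp_all add: g2_eq g3_eq a_def b_def)
    have "fode z = (-2/z^3 + z*(2*a + 4*b*z^2 + z^4*RR2 z))^2 - 4*(1/z^2 + z^2*(a + b*z^2 + z^4*RR z))^3
      + 20*a*(1/z^2 + z^2*(a + b*z^2 + z^4*RR z)) + 28*b"
      unfolding fode_def wp_small[OF conjunct1[OF z] conjunct2[OF z]] wpd_small[OF conjunct1[OF z] conjunct2[OF z]]
        g2 g3 a_def b_def by simp
    also have "\<dots> = z^2 * \<Phi> z" unfolding \<Phi>_def by (rule fode_alg) (use z in simp)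
    finally show "fode z = z^2 * \<Phi> z" .
  qed
  have B: "Bfun \<Phi> (at 0)"
    unfolding \<Phi>_def
    by (intro Bfun_add' Bfun_diff' Bfun_mult' Bfun_power' Bfun_const Bfun_RR Bfun_RR2 Bfun_id_at0)
  have "Zfun (\<lambda>z. z^2 * \<Phi> z) (at 0)"
    by (rule bounded_bilinear.Zfun_prod_Bfun[OF bounded_bilinear_mult Zfun_sq_at0 B])
  then have "((\<lambda>z. z^2 * \<Phi> z) \<longlongrightarrow> 0) (at 0)" by (simp add: tendsto_Zfun_iff)
  then show ?thesis using eq by (simp add: tendsto_cong)
qed

lemma wpd_eq_deriv: "z \<notin> lattice \<tau> \<Longrightarrow> wpd z = deriv (wp \<tau>) z"
  using wp_deriv DERIV_imp_deriv by metis

lemma wpd_holo: "wpd holomorphic_on (- lattice \<tau>)"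
proof -
  have "deriv (wp \<tau>) holomorphic_on (- lattice \<tau>)"
    by (intro holomorphic_deriv wp_holo open_compl_L)
  then show ?thesis by (rule holomorphic_transform) (simp add: wpd_eq_deriv)
qed

lemma fode_holo: "fode holomorphic_on (- lattice \<tau>)"
  unfolding fode_def[abs_def] by (intro holomorphic_intros wpd_holo wp_holo)

lemma FF_holo: "FF holomorphic_on (- lattice \<tau>)"
  by (rule holomorphic_transform[OF fode_holo]) (simp add: FF_def)

lemma FF_per1: "FF (z + 1) = FF z"
proof (cases "z \<in> lattice \<tau>")
  case True then show ?thesis by (simp add: FF_def L_add)
next
  case False
  then have "z + 1 \<notin> lattice \<tau>" using L_shift_iff[of 1 z] by simp
  then show ?thesis using False by (simp add: FF_def fode_def wp_per1 wpd_periodic)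
qed

lemma FF_pertau: "FF (z + \<tau>) = FF z"
proof (cases "z \<in> lattice \<tau>")
  case True then show ?thesis by (simp add: FF_def L_add)
next
  case False
  then have "z + \<tau> \<notin> lattice \<tau>" using L_shift_iff[of \<tau> z] by simp
  then show ?thesis using False by (simp add: FF_def fode_def wp_pertau wpd_periodic)
qed

lemma FF_per: "w \<in> lattice \<tau> \<Longrightarrow> FF (z + w) = FF z"
  by (rule per_L[OF FF_per1 FF_pertau])

lemma FF_lim0: "(FF \<longlongrightarrow> 0) (at 0)"
proof -
  have "eventually (\<lambda>z. fode z = FF z) (at 0)"
    by (rule eventually_mono[OF ev_small]) (use small_notin_L cL_pos in \<open>auto simp: FF_def\<close>)
  then show ?thesis by (rule Lim_transform_eventually[OF fode_lim0])
qed

lemma FF_lim_L: "w \<in> lattice \<tau> \<Longrightarrow> (FF \<longlongrightarrow> FF w) (at w)"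
proof -
  assume w: "w \<in> lattice \<tau>"
  have "((\<lambda>h. FF (w + h)) \<longlongrightarrow> 0) (at 0)"
    using FF_lim0 by (simp add: FF_per[OF w] add.commute)
  then have "(FF \<longlongrightarrow> 0) (at w)"
    by (cases "w = 0") (simp_all add: LIM_offset_zero_iff)
  then show ?thesis using w by (simp add: FF_def)
qed

lemma FF_entire: "FF holomorphic_on UNIV"
proof -
  have "FF field_differentiable (at z)" for z
  proof (cases "z \<in> lattice \<tau>")
    case False
    then show ?thesis using FF_holo open_compl_L holomorphic_on_imp_differentiable_at by blast
  next
    case True
    have "FF holomorphic_on ball z cL"
    proof (rule no_isolated_singularity'[where K="{z}"])
      show "(FF \<longlongrightarrow> FF x) (at x within ball z cL)" if "x \<in> {z}" for x
        using FF_lim_L[OF True] that tendsto_within_subset by force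
      have "ball z cL - {z} \<subseteq> - lattice \<tau>"
      proof
        fix x assume x: "x \<in> ball z cL - {z}"
        show "x \<in> - lattice \<tau>"
        proof
          assume "x \<in> lattice \<tau>"
          then have "dist x z \<ge> cL" using L_sep True x by blast
          with x show False by (simp add: dist_commute)
        qed
      qed
      then show "FF holomorphic_on (ball z cL - {z})" by (rule holomorphic_on_subset[OF FF_holo])
    qed auto
    then show ?thesis using cL_pos holomorphic_on_imp_differentiable_at[of FF "ball z cL" z] by auto
  qed
  then show ?thesis by (simp add: holomorphic_on_def field_differentiable_at_within)
qed

lemma reduce_point:
  obtains w p where "w \<in> lattice \<tau>" "z = p + w" "cmod p \<le> 1 + Im \<tau>"
proof -
  define n where "n = \<lfloor>Im z / Im \<tau>\<rfloor>"
  define z1 where "z1 = z - of_int n * \<tau>"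
  define m where "m = \<lfloor>Re z1\<rfloor>"
  define p where "p = z1 - of_int m"
  have "Im z1 = Im z - of_int n * Im \<tau>" by (simp add: z1_def)
  moreover have "of_int n \<le> Im z / Im \<tau>" "Im z / Im \<tau> < of_int n + 1" unfolding n_def by linarith+
  ultimately have i1: "Im z1 \<ge> 0" "Im z1 < Im \<tau>" using Imtau by (simp_all add: field_simps)
  have rp: "Re p = Re z1 - of_int m" by (simp add: p_def)
  have "of_int m \<le> Re z1" "Re z1 < of_int m + 1" unfolding m_def by linarith+
  then have r: "Re p \<ge> 0" "Re p < 1" using rp by linarith+
  have ip: "Im p = Im z1" by (simp add: p_def)
  have "cmod p \<le> \<bar>Re p\<bar> + \<bar>Im p\<bar>" by (rule cmod_le)
  also have "\<dots> \<le> 1 + Im \<tau>" using r i1 ip by auto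
  finally have "cmod p \<le> 1 + Im \<tau>" .
  moreover have "z = p + (of_int m + of_int n * \<tau>)" by (simp add: p_def z1_def)
  ultimately show ?thesis using that L_memI by blast
qed

lemma FF_zero: "FF z = 0"
proof -
  have cont: "continuous_on UNIV FF" using FF_entire holomorphic_on_imp_continuous_on by blast
  have "compact (FF ` cball 0 (1 + Im \<tau>))"
    by (intro compact_continuous_image continuous_on_subset[OF cont]) auto
  then have bnd: "bounded (FF ` cball 0 (1 + Im \<tau>))" by (rule compact_imp_bounded)
  have "range FF \<subseteq> FF ` cball 0 (1 + Im \<tau>)"
  proof
    fix y assume "y \<in> range FF"
    then obtain z where y: "y = FF z" by auto
    obtain w p where "w \<in> lattice \<tau>" "z = p + w" "cmod p \<le> 1 + Im \<tau>" by (rule reduce_point)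
    then have "y = FF p" "p \<in> cball 0 (1 + Im \<tau>)" using y FF_per by auto
    then show "y \<in> FF ` cball 0 (1 + Im \<tau>)" by blast
  qed
  then have "bounded (range FF)" using bnd bounded_subset by blast
  then have "FF constant_on UNIV" using Liouville_theorem[OF FF_entire] by blast
  then have "FF z = FF 0" by (auto simp: constant_on_def)
  then show ?thesis by (simp add: FF_def)
qed

theorem wp_ode:
  assumes "z \<notin> lattice \<tau>"
  shows "(wpd z)^2 = 4 * (wp \<tau> z)^3 - g2 \<tau> * wp \<tau> z - g3 \<tau>"
proof -
  have "fode z = 0" using FF_zero[of z] assms by (simp add: FF_def)
  then show ?thesis by (simp add: fode_def algebra_simps)
qed

lemma wpd_half:
  assumes "u \<notin> lattice \<tau>" "2 * u \<in> lattice \<tau>"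
  shows "wpd u = 0"
proof -
  have mu: "-u \<notin> lattice \<tau>" using assms L_uminus_iff by auto
  have "wpd u = wpd (-u + 2 * u)" by simp
  also have "\<dots> = wpd (-u)" by (rule wpd_periodic[OF mu assms(2)])
  also have "\<dots> = - wpd u" by (rule wpd_odd[OF assms(1)])
  finally show ?thesis by simp
qed

end


context wlat begin

lemma wp_sq_lim: "((\<lambda>z. z^2 * wp \<tau> z) \<longlongrightarrow> 1) (at 0)"
proof -
  define \<Psi> where "\<Psi> = (\<lambda>z. 3*G4 + 5*G6*z^2 + z^4*RR z)"
  have eq: "eventually (\<lambda>z. 1 + z^2 * (z^2 * \<Psi> z) = z^2 * wp \<tau> z) (at 0)"
  proof (rule eventually_mono[OF ev_small])
    fix z :: complex assume z: "z \<noteq> 0 \<and> cmod z \<le> cL / 2"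
    then show "1 + z^2 * (z^2 * \<Psi> z) = z^2 * wp \<tau> z"
      using wp_small[of z] by (simp add: \<Psi>_def field_simps)
  qed
  have B: "Bfun (\<lambda>z. z^2 * \<Psi> z) (at 0)"
    unfolding \<Psi>_def by (intro Bfun_add' Bfun_mult' Bfun_power' Bfun_const Bfun_RR Bfun_id_at0)
  have "Zfun (\<lambda>z. z^2 * (z^2 * \<Psi> z)) (at 0)"
    by (rule bounded_bilinear.Zfun_prod_Bfun[OF bounded_bilinear_mult Zfun_sq_at0 B])
  then have "((\<lambda>z. z^2 * (z^2 * \<Psi> z)) \<longlongrightarrow> 0) (at 0)" by (simp add: tendsto_Zfun_iff)
  then have "((\<lambda>z. 1 + z^2 * (z^2 * \<Psi> z)) \<longlongrightarrow> 1 + 0) (at 0)" by (intro tendsto_add tendsto_const)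
  then show ?thesis using eq by (simp add: Lim_transform_eventually)
qed

lemma wpd_cube_lim: "((\<lambda>z. z^3 * wpd z) \<longlongrightarrow> -2) (at 0)"
proof -
  define \<Psi> where "\<Psi> = (\<lambda>z. 2*(3*G4) + 4*(5*G6)*z^2 + z^4*RR2 z)"
  have eq: "eventually (\<lambda>z. -2 + z^2 * (z^2 * \<Psi> z) = z^3 * wpd z) (at 0)"
  proof (rule eventually_mono[OF ev_small])
    fix z :: complex assume z: "z \<noteq> 0 \<and> cmod z \<le> cL / 2"
    then show "-2 + z^2 * (z^2 * \<Psi> z) = z^3 * wpd z"
      using wpd_small[of z] by (simp add: \<Psi>_def field_simps eval_nat_numeral)
  qed
  have B: "Bfun (\<lambda>z. z^2 * \<Psi> z) (at 0)"
    unfolding \<Psi>_def by (intro Bfun_add' Bfun_mult' Bfun_power' Bfun_const Bfun_RR2 Bfun_id_at0)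
  have "Zfun (\<lambda>z. z^2 * (z^2 * \<Psi> z)) (at 0)"
    by (rule bounded_bilinear.Zfun_prod_Bfun[OF bounded_bilinear_mult Zfun_sq_at0 B])
  then have "((\<lambda>z. z^2 * (z^2 * \<Psi> z)) \<longlongrightarrow> 0) (at 0)" by (simp add: tendsto_Zfun_iff)
  then have "((\<lambda>z. -2 + z^2 * (z^2 * \<Psi> z)) \<longlongrightarrow> -2 + 0) (at 0)" by (intro tendsto_add tendsto_const)
  then show ?thesis using eq by (simp add: Lim_transform_eventually)
qed

lemma exists_wpd_nonzero: "\<exists>\<beta>. \<beta> \<notin> lattice \<tau> \<and> wpd \<beta> \<noteq> 0"
proof -
  have "eventually (\<lambda>z. z^3 * wpd z \<noteq> 0) (at (0::complex))"
    by (rule tendsto_imp_eventually_ne[OF wpd_cube_lim]) simp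
  then have "eventually (\<lambda>z. (z \<noteq> 0 \<and> cmod z \<le> cL / 2) \<and> z^3 * wpd z \<noteq> 0) (at (0::complex))"
    using ev_small by (simp add: eventually_conj_iff)
  then obtain z where z: "z \<noteq> 0" "cmod z \<le> cL / 2" "z^3 * wpd z \<noteq> 0"
    using eventually_happens[of _ "at (0::complex)"] by auto
  have "z \<notin> lattice \<tau>" using small_notin_L[of z] z cL_pos by simp
  then show ?thesis using z by auto
qed

definition D2 :: "complex \<Rightarrow> complex" where "D2 = deriv wpd"

lemma D2_holo: "D2 holomorphic_on (- lattice \<tau>)"
  unfolding D2_def by (intro holomorphic_deriv wpd_holo open_compl_L)

lemma wpd_has_D2: "z \<notin> lattice \<tau> \<Longrightarrow> (wpd has_field_derivative D2 z) (at z)"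
  unfolding D2_def
  using wpd_holo open_compl_L holomorphic_on_imp_differentiable_at DERIV_deriv_iff_field_differentiable
  by (metis ComplI)

lemma prod_zero:
  assumes z: "z \<notin> lattice \<tau>"
  shows "wpd z * (D2 z - 6 * (wp \<tau> z)^2 + g2 \<tau> / 2) = 0"
proof -
  have dwp: "(wp \<tau> has_field_derivative wpd z) (at z)" by (rule wp_deriv[OF z])
  have dd: "(wpd has_field_derivative D2 z) (at z)" by (rule wpd_has_D2[OF z])
  have d1: "((\<lambda>z. (wpd z)^2 - (4 * (wp \<tau> z)^3 - g2 \<tau> * wp \<tau> z - g3 \<tau>)) has_field_derivative
      (2 * wpd z * D2 z - (12 * (wp \<tau> z)^2 * wpd z - g2 \<tau> * wpd z))) (at z)"
    by (auto intro!: derivative_eq_intros dwp dd simp: algebra_simps eval_nat_numeral)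
  have d0: "((\<lambda>z. (wpd z)^2 - (4 * (wp \<tau> z)^3 - g2 \<tau> * wp \<tau> z - g3 \<tau>)) has_field_derivative 0) (at z)"
  proof (rule has_field_derivative_transform_within_open[OF DERIV_const open_compl_L])
    show "z \<in> - lattice \<tau>" using z by simp
    fix x assume "x \<in> - lattice \<tau>"
    then show "0 = (wpd x)^2 - (4 * (wp \<tau> x)^3 - g2 \<tau> * wp \<tau> x - g3 \<tau>)"
      using wp_ode[of x] by simp
  qed
  have "2 * wpd z * D2 z - (12 * (wp \<tau> z)^2 * wpd z - g2 \<tau> * wpd z) = 0"
    using DERIV_unique[OF d1 d0] .
  then have "2 * (wpd z * (D2 z - 6 * (wp \<tau> z)^2 + g2 \<tau> / 2)) = 0"
    by (simp add: algebra_simps)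
  then show ?thesis by simp
qed

lemma wp_ode2:
  assumes z: "z \<notin> lattice \<tau>"
  shows "D2 z = 6 * (wp \<tau> z)^2 - g2 \<tau> / 2"
proof -
  define Q where "Q = (\<lambda>z. D2 z - 6 * (wp \<tau> z)^2 + g2 \<tau> / 2)"
  have Qh: "Q holomorphic_on (- lattice \<tau>)"
    unfolding Q_def by (intro holomorphic_intros D2_holo wp_holo)
  have "Q z = 0"
  proof (cases "wpd z = 0")
    case False
    then show ?thesis using prod_zero[OF z] by (simp add: Q_def)
  next
    case True
    obtain \<beta> where \<beta>: "\<beta> \<notin> lattice \<tau>" "wpd \<beta> \<noteq> 0" using exists_wpd_nonzero by blast
    obtain r where r: "0 < r" "ball z r \<subseteq> - lattice \<tau>" "\<And>x. x \<in> ball z r - {z} \<Longrightarrow> wpd x \<noteq> 0"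
      using isolated_zeros[OF wpd_holo open_compl_L connected_compl_L _ True _ \<beta>(2)] z \<beta>(1) by auto
    have ev: "eventually (\<lambda>x. Q x = 0) (at z)"
    proof -
      have "eventually (\<lambda>x. x \<noteq> z \<and> dist x z < r) (at z)"
        unfolding eventually_at using r(1) by (intro exI[of _ r]) auto
      then show ?thesis
      proof (rule eventually_mono)
        fix x assume x: "x \<noteq> z \<and> dist x z < r"
        then have xb: "x \<in> ball z r - {z}" by (simp add: dist_commute)
        then have "x \<notin> lattice \<tau>" using r(2) by auto
        then show "Q x = 0" using prod_zero[of x] r(3)[OF xb] by (simp add: Q_def)
      qed
    qed
    have "(Q \<longlongrightarrow> Q z) (at z)"
      using Qh open_compl_L z holomorphic_on_imp_continuous_on continuous_on_eq_continuous_at isCont_def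
      by (metis ComplI)
    moreover have "(Q \<longlongrightarrow> 0) (at z)"
      by (rule tendsto_eventually[OF ev])
    ultimately show ?thesis by (rule tendsto_unique[rotated 1]) simp
  qed
  then have "D2 z - 6 * (wp \<tau> z)^2 + g2 \<tau> / 2 = 0" by (simp add: Q_def)
  then have "D2 z = D2 z - (D2 z - 6 * (wp \<tau> z)^2 + g2 \<tau> / 2)" by simp
  then show ?thesis by (simp add: algebra_simps)
qed

lemma deriv2_wp:
  assumes z: "z \<notin> lattice \<tau>"
  shows "(deriv ^^ 2) (wp \<tau>) z = 6 * (wp \<tau> z)^2 - g2 \<tau> / 2"
proof -
  have "(deriv ^^ 1) (deriv (wp \<tau>)) z = (deriv ^^ 1) wpd z"
  proof (rule higher_deriv_transform_within_open[OF _ wpd_holo open_compl_L])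
    show "deriv (wp \<tau>) holomorphic_on - lattice \<tau>" by (intro holomorphic_deriv wp_holo open_compl_L)
    show "z \<in> - lattice \<tau>" using z by simp
    show "\<And>w. w \<in> - lattice \<tau> \<Longrightarrow> deriv (wp \<tau>) w = wpd w" by (simp add: wpd_eq_deriv)
  qed
  then have "(deriv ^^ 2) (wp \<tau>) z = D2 z" by (simp add: D2_def numeral_2_eq_2)
  then show ?thesis using wp_ode2[OF z] by simp
qed

lemma deriv_rec:
  assumes z: "z \<notin> lattice \<tau>"
  shows "(deriv ^^ (k + 2)) (wp \<tau>) z =
     6 * (\<Sum>i = 0..k. of_nat (k choose i) * (deriv ^^ i) (wp \<tau>) z * (deriv ^^ (k - i)) (wp \<tau>) z)
     - (if k = 0 then g2 \<tau> / 2 else 0)"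
proof -
  have S: "open (- lattice \<tau>)" "z \<in> - lattice \<tau>" using open_compl_L z by auto
  have "(deriv ^^ (k + 2)) (wp \<tau>) z = (deriv ^^ k) ((deriv ^^ 2) (wp \<tau>)) z"
    by (simp only: funpow_add comp_def)
  also have "\<dots> = (deriv ^^ k) (\<lambda>w. 6 * (wp \<tau> w * wp \<tau> w) - g2 \<tau> / 2) z"
  proof (rule higher_deriv_transform_within_open[OF _ _ S(1) S(2)])
    show "(deriv ^^ 2) (wp \<tau>) holomorphic_on - lattice \<tau>" by (intro holomorphic_higher_deriv wp_holo S(1))
    show "(\<lambda>w. 6 * (wp \<tau> w * wp \<tau> w) - g2 \<tau> / 2) holomorphic_on - lattice \<tau>"
      by (intro holomorphic_intros wp_holo)
    show "\<And>w. w \<in> - lattice \<tau> \<Longrightarrow> (deriv ^^ 2) (wp \<tau>) w = 6 * (wp \<tau> w * wp \<tau> w) - g2 \<tau> / 2"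
      using deriv2_wp by (simp add: power2_eq_square)
  qed
  also have "\<dots> = (deriv ^^ k) (\<lambda>w. 6 * (wp \<tau> w * wp \<tau> w)) z - (deriv ^^ k) (\<lambda>w. g2 \<tau> / 2) z"
    by (rule higher_deriv_diff[OF _ _ S]) (intro holomorphic_intros wp_holo)+
  also have "(deriv ^^ k) (\<lambda>w. 6 * (wp \<tau> w * wp \<tau> w)) z = 6 * (deriv ^^ k) (\<lambda>w. wp \<tau> w * wp \<tau> w) z"
    by (rule higher_deriv_cmult[OF _ S(2) S(1)]) (intro holomorphic_intros wp_holo)
  also have "(deriv ^^ k) (\<lambda>w. wp \<tau> w * wp \<tau> w) z =
      (\<Sum>i = 0..k. of_nat (k choose i) * (deriv ^^ i) (wp \<tau>) z * (deriv ^^ (k - i)) (wp \<tau>) z)"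
    by (rule higher_deriv_mult[OF wp_holo wp_holo S])
  finally show ?thesis by simp
qed

lemma all_derivs_eq:
  assumes u: "u \<notin> lattice \<tau>" "2 * u \<in> lattice \<tau>" and v: "v \<notin> lattice \<tau>" "2 * v \<in> lattice \<tau>"
    and eq: "wp \<tau> u = wp \<tau> v"
  shows "(deriv ^^ n) (wp \<tau>) u = (deriv ^^ n) (wp \<tau>) v"
proof (induction n rule: less_induct)
  case (less n)
  show ?case
  proof (cases "n \<le> 1")
    case True
    then consider "n = 0" | "n = 1" by linarith
    then show ?thesis
    proof cases
      case 1 then show ?thesis using eq by simp
    next
      case 2
      then show ?thesis using wpd_half[OF u] wpd_half[OF v] wpd_eq_deriv[OF u(1)] wpd_eq_deriv[OF v(1)] by simp
    qed
  next
    case False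
    then obtain k where n: "n = k + 2" by (metis add.commute le_add_diff_inverse2 not_le Suc_leI one_add_one plus_1_eq_Suc)
    have "(\<Sum>i = 0..k. of_nat (k choose i) * (deriv ^^ i) (wp \<tau>) u * (deriv ^^ (k - i)) (wp \<tau>) u)
        = (\<Sum>i = 0..k. of_nat (k choose i) * (deriv ^^ i) (wp \<tau>) v * (deriv ^^ (k - i)) (wp \<tau>) v)"
    proof (rule sum.cong)
      fix i assume "i \<in> {0..k}"
      then have "i < n" "k - i < n" using n by auto
      then show "of_nat (k choose i) * (deriv ^^ i) (wp \<tau>) u * (deriv ^^ (k - i)) (wp \<tau>) u
          = of_nat (k choose i) * (deriv ^^ i) (wp \<tau>) v * (deriv ^^ (k - i)) (wp \<tau>) v"
        using less.IH by simp
    qed simp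
    then show ?thesis unfolding n deriv_rec[OF u(1)] deriv_rec[OF v(1)] by simp
  qed
qed

lemma wp_half_distinct:
  assumes u: "u \<notin> lattice \<tau>" "2 * u \<in> lattice \<tau>" and v: "v \<notin> lattice \<tau>" "2 * v \<in> lattice \<tau>"
    and vu: "v - u \<notin> lattice \<tau>"
  shows "wp \<tau> u \<noteq> wp \<tau> v"
proof
  assume eq: "wp \<tau> u = wp \<tau> v"
  define U where "U = - ((\<lambda>\<omega>. \<omega> - u) ` lattice \<tau> \<union> (\<lambda>\<omega>. \<omega> - v) ` lattice \<tau>)"
  have Umem: "w \<in> U \<longleftrightarrow> u + w \<notin> lattice \<tau> \<and> v + w \<notin> lattice \<tau>" for w
  proof -
    have "w \<in> (\<lambda>\<omega>. \<omega> - u) ` lattice \<tau> \<longleftrightarrow> u + w \<in> lattice \<tau>"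
      by (auto simp: image_iff) (metis add_diff_cancel_left')
    moreover have "w \<in> (\<lambda>\<omega>. \<omega> - v) ` lattice \<tau> \<longleftrightarrow> v + w \<in> lattice \<tau>"
      by (auto simp: image_iff) (metis add_diff_cancel_left')
    ultimately show ?thesis by (simp add: U_def)
  qed
  have openU: "open U"
  proof -
    have "U = (\<lambda>w. u + w) -` (- lattice \<tau>) \<inter> (\<lambda>w. v + w) -` (- lattice \<tau>)"
      using Umem by auto
    moreover have "open ((\<lambda>w. u + w) -` (- lattice \<tau>))" "open ((\<lambda>w. v + w) -` (- lattice \<tau>))"
      by (intro continuous_open_vimage open_compl_L continuous_intros; simp)+
    ultimately show ?thesis by auto
  qed
  have connU: "connected U"
  proof -
    have "connected (UNIV - ((\<lambda>\<omega>. \<omega> - u) ` lattice \<tau> \<union> (\<lambda>\<omega>. \<omega> - v) ` lattice \<tau>))"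
      by (rule connected_open_diff_countable) (auto simp: countable_L)
    then show ?thesis by (simp add: U_def Compl_eq_Diff_UNIV)
  qed
  have U0: "0 \<in> U" using Umem u v by simp
  have h1: "(\<lambda>w. wp \<tau> (1 * w + u)) holomorphic_on U"
  proof -
    have "(\<lambda>w. 1 * w + u) ` U \<subseteq> - lattice \<tau>" using Umem by (auto simp: add.commute)
    then have "(wp \<tau> \<circ> (\<lambda>w. 1 * w + u)) holomorphic_on U"
      by (intro holomorphic_on_compose holomorphic_intros holomorphic_on_subset[OF wp_holo])
    then show ?thesis by (simp add: o_def)
  qed
  have h2: "(\<lambda>w. wp \<tau> (1 * w + v)) holomorphic_on U"
  proof -
    have "(\<lambda>w. 1 * w + v) ` U \<subseteq> - lattice \<tau>" using Umem by (auto simp: add.commute)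
    then have "(wp \<tau> \<circ> (\<lambda>w. 1 * w + v)) holomorphic_on U"
      by (intro holomorphic_on_compose holomorphic_intros holomorphic_on_subset[OF wp_holo])
    then show ?thesis by (simp add: o_def)
  qed
  have dn: "(deriv ^^ n) (\<lambda>w. wp \<tau> (1 * w + u)) 0 = (deriv ^^ n) (\<lambda>w. wp \<tau> (1 * w + v)) 0" for n
  proof -
    have "(deriv ^^ n) (\<lambda>w. wp \<tau> (1 * w + u)) 0 = 1 ^ n * (deriv ^^ n) (wp \<tau>) (1 * 0 + u)"
      by (rule higher_deriv_compose_linear'[OF wp_holo openU open_compl_L U0]) (use Umem in \<open>auto simp: add.commute\<close>)
    moreover have "(deriv ^^ n) (\<lambda>w. wp \<tau> (1 * w + v)) 0 = 1 ^ n * (deriv ^^ n) (wp \<tau>) (1 * 0 + v)"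
      by (rule higher_deriv_compose_linear'[OF wp_holo openU open_compl_L U0]) (use Umem in \<open>auto simp: add.commute\<close>)
    ultimately show ?thesis using all_derivs_eq[OF u v eq, of n] by simp
  qed
  have same: "wp \<tau> (1 * w + u) = wp \<tau> (1 * w + v)" if "w \<in> U" for w
    by (rule holomorphic_fun_eq_on_connected[OF h1 h2 openU connU dn U0 that])
  have evs: "eventually (\<lambda>h. wp \<tau> h = wp \<tau> (v - u + h)) (at 0)"
  proof -
    have "eventually (\<lambda>h. v - u + h \<in> - lattice \<tau>) (at 0)"
    proof -
      obtain e where e: "e > 0" "ball (v - u) e \<subseteq> - lattice \<tau>"
        using open_compl_L vu by (metis ComplI openE)
      have "\<forall>h\<in>UNIV. h \<noteq> 0 \<and> dist h 0 < e \<longrightarrow> v - u + h \<in> - lattice \<tau>"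
      proof (intro ballI impI)
        fix h :: complex assume "h \<noteq> 0 \<and> dist h 0 < e"
        then have "v - u + h \<in> ball (v - u) e" by (simp add: dist_norm)
        then show "v - u + h \<in> - lattice \<tau>" using e by blast
      qed
      then show ?thesis unfolding eventually_at using e by blast
    qed
    then show ?thesis
    proof (rule eventually_mono[OF eventually_conj[OF _ ev_small]])
      fix h assume h: "v - u + h \<in> - lattice \<tau> \<and> h \<noteq> 0 \<and> cmod h \<le> cL / 2"
      have "cmod h < cL" using h cL_pos by linarith
      then have "h \<notin> lattice \<tau>" using small_notin_L[of h] h by auto
      then have "h - u \<in> U" using h Umem[of "h - u"] by (simp add: algebra_simps)
      then show "wp \<tau> h = wp \<tau> (v - u + h)" using same[of "h - u"] by (simp add: algebra_simps)
    qed
  qed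
  have "((\<lambda>h. h^2 * wp \<tau> (v - u + h)) \<longlongrightarrow> 0^2 * wp \<tau> (v - u + 0)) (at 0)"
  proof (intro tendsto_intros)
    have "isCont (wp \<tau>) (v - u)"
      using wp_holo open_compl_L vu holomorphic_on_imp_continuous_on continuous_on_eq_continuous_at by (metis ComplI)
    then show "((\<lambda>h. wp \<tau> (v - u + h)) \<longlongrightarrow> wp \<tau> (v - u + 0)) (at 0)"
      by (simp add: isCont_def LIM_offset_zero)
  qed
  then have lim1: "((\<lambda>h. h^2 * wp \<tau> (v - u + h)) \<longlongrightarrow> 0) (at 0)" by simp
  have "eventually (\<lambda>h. h^2 * wp \<tau> (v - u + h) = h^2 * wp \<tau> h) (at 0)"
    using evs by (rule eventually_mono) simp
  then have l0: "((\<lambda>h. h^2 * wp \<tau> h) \<longlongrightarrow> 0) (at 0)"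
    by (rule Lim_transform_eventually[OF lim1])
  have "(1::complex) = 0" using tendsto_unique[OF _ wp_sq_lim l0] by simp
  then show False by simp
qed

end

lemma jreal:
  fixes x y :: complex
  assumes "cmod x = cmod y"
  shows "1728 * (4 * (x^2 + x*y + y^2))^3 / ((4 * (x^2 + x*y + y^2))^3 - 27 * (-4 * x * y * (x + y))^2) \<in> \<real>"
proof (cases "x = 0")
  case True
  then have "y = 0" using assms by simp
  then show ?thesis using True by simp
next
  case False
  define w where "w = y / x"
  have y: "y = x * w" using False by (simp add: w_def)
  have "cmod w = cmod y / cmod x" by (simp add: w_def norm_divide)
  moreover have "y \<noteq> 0" using assms False by auto
  ultimately have "cmod w = 1" using assms False by simp
  then have ww: "w * cnj w = 1" using complex_norm_square[of w] by simp
  have w0: "w \<noteq> 0" using ww by auto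
  define s where "s = 1 + 2 * Re w"
  define t where "t = 2 + 2 * Re w"
  have A: "1 + w + w^2 = w * of_real s"
  proof -
    have "of_real s = 1 + (w + cnj w)" by (simp add: s_def complex_add_cnj)
    then show ?thesis using ww by (simp add: algebra_simps power2_eq_square)
  qed
  have B: "(1 + w)^2 = w * of_real t"
  proof -
    have "of_real t = 2 + (w + cnj w)" by (simp add: t_def complex_add_cnj)
    then show ?thesis using ww by (simp add: algebra_simps power2_eq_square)
  qed
  have G2: "4 * (x^2 + x*y + y^2) = 4 * x^2 * w * of_real s"
    using A y by algebra
  have G3: "(-4 * x * y * (x + y))^2 = 16 * x^6 * w^3 * of_real t"
  proof -
    show ?thesis using B y by algebra
  qed
  have c0: "x^6 * w^3 \<noteq> 0" using False w0 by simp
  have "1728 * (4 * (x^2 + x*y + y^2))^3 / ((4 * (x^2 + x*y + y^2))^3 - 27 * (-4 * x * y * (x + y))^2)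
      = (x^6 * w^3) * (1728 * 64 * of_real s ^ 3) / ((x^6 * w^3) * (64 * of_real s ^ 3 - 432 * of_real t))"
    unfolding G2 G3 by (simp add: algebra_simps eval_nat_numeral)
  also have "\<dots> = (1728 * 64 * of_real s ^ 3) / (64 * of_real s ^ 3 - 432 * of_real t)"
    using c0 by (rule mult_divide_mult_cancel_left)
  also have "\<dots> = of_real ((1728 * 64 * s ^ 3) / (64 * s ^ 3 - 432 * t))" by simp
  finally show ?thesis by (simp add: Reals_of_real)
qed



theorem lemma5p2:
  fixes \<tau> :: complex and i j :: nat
  assumes "Im \<tau> > 0"
    and "i \<in> {1,2,3}" and "j \<in> {1,2,3}" and "i \<noteq> j"
    and "cmod (e_val \<tau> i) = cmod (e_val \<tau> j)"
  shows "j_invariant \<tau> \<in> \<real>"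
proof -
  interpret wlat \<tau> by unfold_locales (rule assms(1))
  define u where "u = (\<lambda>k::nat. if k = 1 then 1/2 else if k = 2 then \<tau>/2 else (1+\<tau>)/2)"
  have e: "e_val \<tau> k = wp \<tau> (u k)" for k by (simp add: e_val_def u_def)
  have nL1: "1/2 \<notin> lattice \<tau>"
  proof -
    have "(1::complex)/2 = (of_int 1 + of_int 0 * \<tau>) / 2" by simp
    then show ?thesis using not_L_half[of 1 0] by simp
  qed
  have nL2: "\<tau>/2 \<notin> lattice \<tau>"
  proof -
    have "\<tau>/2 = (of_int 0 + of_int 1 * \<tau>) / 2" by simp
    then show ?thesis using not_L_half[of 0 1] by simp
  qed
  have nL3: "(1+\<tau>)/2 \<notin> lattice \<tau>"
  proof -
    have "(1+\<tau>)/2 = (of_int 1 + of_int 1 * \<tau>) / 2" by simp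
    then show ?thesis using not_L_half[of 1 1] by simp
  qed
  have nL4: "\<tau>/2 - 1/2 \<notin> lattice \<tau>"
  proof -
    have a: "(of_int (-1) + of_int 1 * \<tau>) / 2 \<notin> lattice \<tau>" by (rule not_L_half) simp
    have eq: "\<tau>/2 - 1/2 = (of_int (-1) + of_int 1 * \<tau>) / 2" by (simp add: field_simps)
    show ?thesis unfolding eq by (rule a)
  qed
  have two: "2 * u k \<in> lattice \<tau>" for k
  proof -
    have "2 * u k = (if k = 1 then 1 else if k = 2 then \<tau> else 1 + \<tau>)" by (simp add: u_def)
    then show ?thesis by (simp add: L_add)
  qed
  have half: "u k \<notin> lattice \<tau>" if "k \<in> {1,2,3}" for k
    using that nL1 nL2 nL3 by (auto simp: u_def)
  have diff: "u l - u k \<notin> lattice \<tau>" if "k \<in> {1,2,3}" "l \<in> {1,2,3}" "k \<noteq> l" for k l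
  proof -
    have d1: "(1+\<tau>)/2 - 1/2 = \<tau>/2" by (simp add: field_simps)
    have d2: "(1+\<tau>)/2 - \<tau>/2 = 1/2" by (simp add: field_simps)
    have neg: "x \<notin> lattice \<tau> \<Longrightarrow> -x \<notin> lattice \<tau>" for x using L_uminus_iff by blast
    have d1': "1/2 - (1+\<tau>)/2 = - (\<tau>/2)" by (simp add: field_simps)
    have d2': "\<tau>/2 - (1+\<tau>)/2 = - (1/2)" by (simp add: field_simps)
    have d3': "1/2 - \<tau>/2 = - (\<tau>/2 - 1/2)" by simp
    have u1: "u 1 = 1/2" and u2: "u 2 = \<tau>/2" and u3: "u 3 = (1+\<tau>)/2" by (simp_all add: u_def)
    have p12: "u 2 - u 1 \<notin> lattice \<tau>" unfolding u1 u2 by (rule nL4)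
    have p21: "u 1 - u 2 \<notin> lattice \<tau>" unfolding u1 u2 d3' by (rule neg[OF nL4])
    have p13: "u 3 - u 1 \<notin> lattice \<tau>" unfolding u1 u3 d1 by (rule nL2)
    have p31: "u 1 - u 3 \<notin> lattice \<tau>" unfolding u1 u3 d1' by (rule neg[OF nL2])
    have p23: "u 3 - u 2 \<notin> lattice \<tau>" unfolding u2 u3 d2 by (rule nL1)
    have p32: "u 2 - u 3 \<notin> lattice \<tau>" unfolding u2 u3 d2' by (rule neg[OF nL1])
    from that consider "k = 1" "l = 2" | "k = 1" "l = 3" | "k = 2" "l = 1" | "k = 2" "l = 3"
      | "k = 3" "l = 1" | "k = 3" "l = 2" by auto
    then show ?thesis by cases (use p12 p21 p13 p31 p23 p32 in simp_all)
  qed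
  have root: "4 * (e_val \<tau> k)^3 - g2 \<tau> * e_val \<tau> k - g3 \<tau> = 0" if "k \<in> {1,2,3}" for k
  proof -
    have "wpd (u k) = 0" by (rule wpd_half[OF half[OF that] two])
    then show ?thesis using wp_ode[OF half[OF that]] by (simp add: e)
  qed
  define x where "x = e_val \<tau> i"
  define y where "y = e_val \<tau> j"
  have ne: "x \<noteq> y"
    unfolding x_def y_def e
    by (rule wp_half_distinct[OF half[OF assms(2)] two half[OF assms(3)] two diff[OF assms(2,3,4)]])
  have rx: "4 * x^3 - g2 \<tau> * x - g3 \<tau> = 0" using root[OF assms(2)] by (simp add: x_def)
  have ry: "4 * y^3 - g2 \<tau> * y - g3 \<tau> = 0" using root[OF assms(3)] by (simp add: y_def)
  have "(x - y) * (4 * (x^2 + x*y + y^2) - g2 \<tau>) = 0"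
    using rx ry by algebra
  then have G2: "g2 \<tau> = 4 * (x^2 + x*y + y^2)" using ne by simp
  have G3: "g3 \<tau> = -4 * x * y * (x + y)"
    using rx G2 by algebra
  have "j_invariant \<tau> = 1728 * (4 * (x^2 + x*y + y^2))^3 / ((4 * (x^2 + x*y + y^2))^3 - 27 * (-4 * x * y * (x + y))^2)"
    by (simp add: j_invariant_def G2 G3)
  also have "\<dots> \<in> \<real>" by (rule jreal) (use assms(5) in \<open>simp add: x_def y_def\<close>)
  finally show ?thesis .
qed


end
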